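(* Let $m\ge 0$ be an integer, $K\ge 1$, $h>0$, $L=Kh$, and work on the periodic interval $\mathbb{T}_L=\mathbb{R}/L\mathbb{Z}$. Let $c>0$ and $\Delta t>0$, and let $S_{\pm}$ be the shift operators $S_{\pm}f(x)=f(x\pm c\Delta t/2)$. Let $\mathcal{I}$ (resp. $\mathcal{J}$) denote the Hermite interpolation operator of order $m$ on the primary grid (resp. dual grid) defined below. Suppose $p^h(\cdot,n\Delta t)\in\operatorname{Range}(\mathcal{I})$ and $v^h(\cdot,(n+\tfrac12)\Delta t)\in\operatorname{Range}(\mathcal{J})$ for all integers $n\ge 0$ (with also $v^h(\cdot,-\Delta t/2)\in\operatorname{Range}(\mathcal J)$ given), and that for all $n\ge0$, with $t=n\Delta t$, $$v^h(\cdot,t+\tfrac{\Delta t}{2})=v^h(\cdot,t-\tfrac{\Delta t}{2})+\mathcal{J}S_{+}p^h(\cdot,t)-\mathcal{J}S_{-}p^h(\cdot,t),$$ $$p^h(\cdot,t+\Delta t)=p^h(\cdot,t)+\mathcal{I}S_{+}v^h(\cdot,t+\tfrac{\Delta t}{2})-\mathcal{I}S_{-}v^h(\cdot,t+\tfrac{\Delta t}{2}).$$ Define $P^h_{\pm}(\cdot,t)=p^h(\cdot,t)\mp S_{\pm}v^h(\cdot,t-\tfrac{\Delta t}{2})$ and $V^h_{\pm}(\cdot,t+\tfrac{\Delta t}{2})=v^h(\cdot,t+\tfrac{\Delta t}{2})\mp S_{\pm}p^h(\cdot,t)$, and $$Q^h(t)=|P^h_+(\cdot,t)|_{m+1}^2+|P^h_-(\cdot,t)|_{m+1}^2,\qquad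 R^h(t+\tfrac{\Delta t}{2})=|V^h_+(\cdot,t+\tfrac{\Delta t}{2})|_{m+1}^2+|V^h_-(\cdot,t+\tfrac{\Delta t}{2})|_{m+1}^2.$$ Then for every integer $n\ge 0$, $Q^h((n+1)\Delta t)=R^h((n+\tfrac12)\Delta t)=Q^h(n\Delta t)$; in particular $Q^h(n\Delta t)=R^h((n+\tfrac12)\Delta t)=Q^h(0)$ for all $n$.
   Context: Primary grid: nodes $x_j=jh$, $j=0,\dots,K-1$ (mod $L$); dual grid: nodes $x_{j+1/2}=(j+\tfrac12)h$. For a smooth $L$-periodic function $f$, the Hermite interpolant of order $m$ on the primary grid, $\mathcal{I}f$, is the unique $L$-periodic function which on each cell $[x_j,x_{j+1}]$ is a polynomial of degree at most $2m+1$ and whose value and first $m$ derivatives agree with those of $f$ at both endpoints of the cell; $\mathcal{J}$ is defined identically with the dual-grid nodes as cell endpoints. Both are linear projections, and their ranges consist of $C^m$ periodic piecewise polynomials. The seminorm is $|f|_{m+1}^2=\int_{\mathbb{T}_L}|\partial_x^{m+1}f|^2\,dx$ with associated semi-inner product $\langle f,g\rangle_{m+1}=\int_{\mathbb{T}_L}\partial_x^{m+1}f\,\partial_x^{m+1}g\,dx$. It is a known fact (Goodrich et al.) that each of $\mathcal{I},\mathcal{J}$ satisfies the orthogonality property $\langle \mathcal{I}f,\,g-\mathcal{I}g\rangle_{m+1}=0$ for all smooth (or range-of-interpolation) periodic $f,g$. The displayed update is the one-dimensional Hermite-leapfrog scheme for $p_t=c\,v_x$, $v_t=c\,p_x$ (valid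 as a description of the scheme when $c\Delta t<h$). *)

theory Defs
  imports "HOL-Analysis.Analysis" "HOL-Computational_Algebra.Polynomial"
begin

text \<open>Shift operator: (shift a f) x = f (x + a).  S_+ = shift (c dt/2), S_- = shift (-(c dt/2)).\<close>
definition shift :: "real \<Rightarrow> (real \<Rightarrow> real) \<Rightarrow> real \<Rightarrow> real" where
  "shift a f = (\<lambda>x. f (x + a))"

definition hermite_interpolant ::
  "nat \<Rightarrow> real \<Rightarrow> nat \<Rightarrow> real \<Rightarrow> (real \<Rightarrow> real) \<Rightarrow> (real \<Rightarrow> real) \<Rightarrow> bool" where
  "hermite_interpolant m h K x0 f g \<longleftrightarrow>
     (\<forall>x. g (x + real K * h) = g x) \<and>
     (\<forall>j::int. \<exists>q::real poly. degree q \<le> 2 * m + 1 \<and>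
        (\<forall>x\<in>{x0 + of_int j * h .. x0 + (of_int j + 1) * h}. g x = poly q x) \<and>
        (\<forall>k\<le>m. poly ((pderiv ^^ k) q) (x0 + of_int j * h) = (deriv ^^ k) f (x0 + of_int j * h)
              \<and> poly ((pderiv ^^ k) q) (x0 + (of_int j + 1) * h)
                  = (deriv ^^ k) f (x0 + (of_int j + 1) * h)))"

text \<open>The Hermite interpolation operator (primary grid: x0 = 0; dual grid: x0 = h/2).\<close>
definition hermite_op ::
  "nat \<Rightarrow> real \<Rightarrow> nat \<Rightarrow> real \<Rightarrow> (real \<Rightarrow> real) \<Rightarrow> real \<Rightarrow> real" where
  "hermite_op m h K x0 f = (THE g. hermite_interpolant m h K x0 f g)"

text \<open>Range of the (projection) operator = its fixed points: the L-periodic C^m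
  piecewise polynomials of degree at most 2m+1 with breakpoints at the grid nodes.\<close>
definition hermite_range :: "nat \<Rightarrow> real \<Rightarrow> nat \<Rightarrow> real \<Rightarrow> (real \<Rightarrow> real) set" where
  "hermite_range m h K x0 = {g. hermite_interpolant m h K x0 g g}"

definition seminorm_sq :: "nat \<Rightarrow> real \<Rightarrow> nat \<Rightarrow> (real \<Rightarrow> real) \<Rightarrow> real" where
  "seminorm_sq m h K f = integral {0 .. real K * h} (\<lambda>x. ((deriv ^^ Suc m) f x)\<^sup>2)"

text \<open>p x t = p^h(x,t), v x t = v^h(x,t).\<close>
definition Qh :: "nat \<Rightarrow> real \<Rightarrow> nat \<Rightarrow> real \<Rightarrow> real \<Rightarrow>
    (real \<Rightarrow> real \<Rightarrow> real) \<Rightarrow> (real \<Rightarrow> real \<Rightarrow> real) \<Rightarrow> real \<Rightarrow> real" where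
  "Qh m h K c dt p v t =
     seminorm_sq m h K (\<lambda>x. p x t - shift (c * dt / 2) (\<lambda>y. v y (t - dt / 2)) x)
   + seminorm_sq m h K (\<lambda>x. p x t + shift (- (c * dt / 2)) (\<lambda>y. v y (t - dt / 2)) x)"

definition Rh :: "nat \<Rightarrow> real \<Rightarrow> nat \<Rightarrow> real \<Rightarrow> real \<Rightarrow>
    (real \<Rightarrow> real \<Rightarrow> real) \<Rightarrow> (real \<Rightarrow> real \<Rightarrow> real) \<Rightarrow> real \<Rightarrow> real" where
  "Rh m h K c dt p v s =
     seminorm_sq m h K (\<lambda>x. v x s - shift (c * dt / 2) (\<lambda>y. p y (s - dt / 2)) x)
   + seminorm_sq m h K (\<lambda>x. v x s + shift (- (c * dt / 2)) (\<lambda>y. p y (s - dt / 2)) x)"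

end

theory Submission
  imports Defs
begin


lemma hpd_Suc_out: "(pderiv ^^ Suc k) p = pderiv ((pderiv ^^ k) p)" by simp
lemma hpd_Suc_in: "(pderiv ^^ Suc k) p = (pderiv ^^ k) (pderiv p)"
  by (simp del: funpow.simps add: funpow_Suc_right)

lemma higher_pderiv_diff: "(pderiv ^^ n) (p - q) = (pderiv ^^ n) p - (pderiv ^^ n) (q::real poly)"
  by (induction n arbitrary: p q) (simp_all del: funpow.simps add: funpow_Suc_right pderiv_diff)

lemma higher_pderiv_pcompose_shift:
  "(pderiv ^^ k) (pcompose p [:c, 1:]) = pcompose ((pderiv ^^ k) p) [:c, (1::real):]"
proof (induction k)
  case 0 then show ?case by simp
next
  case (Suc k)
  show ?case by (simp add: Suc pderiv_pcompose pderiv_pCons)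
qed

lemma poly_higher_pderiv_0: "poly ((pderiv ^^ k) p) 0 = fact k * coeff (p::real poly) k"
  by (simp add: poly_0_coeff_0 coeff_higher_pderiv pochhammer_fact)

lemma poly_higher_pderiv_at:
  fixes p :: "real poly"
  shows "poly ((pderiv ^^ k) p) a = fact k * coeff (pcompose p [:a, 1:]) k"
proof -
  have "poly ((pderiv ^^ k) p) a = poly ((pderiv ^^ k) (pcompose p [:a, 1:])) 0"
    by (simp only: higher_pderiv_pcompose_shift poly_pcompose) simp
  then show ?thesis by (simp add: poly_higher_pderiv_0)
qed

lemma pcompose_lin_lin: "pcompose [:-b, 1:] [:b, 1:] = [:0, (1::real):]"
  by (simp add: pcompose_pCons)

lemma pcompose_power_gen: "pcompose (p ^ n) q = (pcompose p q) ^ n"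
  by (induction n) (simp_all add: pcompose_1 pcompose_mult)

lemma DV:
  fixes t :: "real poly"
  assumes "k \<le> n"
  shows "poly ((pderiv ^^ k) ([:-b, 1:] ^ n * t)) b = (if k < n then 0 else fact n * poly t b)"
proof -
  have e: "pcompose ([:-b, 1:] ^ n * t) [:b, 1:] = monom 1 n * pcompose t [:b, 1:]"
    by (simp add: pcompose_mult pcompose_power_gen pcompose_lin_lin monom_altdef)
  show ?thesis using assms
    by (auto simp: poly_higher_pderiv_at e coeff_monom_mult poly_0_coeff_0[symmetric] poly_pcompose)
qed

lemma GEN:
  fixes a :: real and s qq :: "real poly"
  assumes "poly s a \<noteq> 0"
  shows "\<exists>r. degree r \<le> n - 1 \<and> (\<forall>k<n. poly ((pderiv ^^ k) (qq + s * r)) a = A k)"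
proof (induction n)
  case 0 show ?case by (rule exI[of _ 0]) simp
next
  case (Suc n)
  then obtain r where r: "degree r \<le> n - 1" "\<forall>k<n. poly ((pderiv ^^ k) (qq + s * r)) a = A k" by blast
  define c where "c = (A n - poly ((pderiv ^^ n) (qq + s * r)) a) / (fact n * poly s a)"
  define r' where "r' = r + smult c ([:-a, 1:] ^ n)"
  have eq: "qq + s * r' = (qq + s * r) + smult c ([:-a, 1:] ^ n * s)"
    by (simp add: r'_def algebra_simps)
  have D: "poly ((pderiv ^^ k) (qq + s * r')) a = poly ((pderiv ^^ k) (qq + s * r)) a
            + c * (if k < n then 0 else fact n * poly s a)" if "k \<le> n" for k
    unfolding eq higher_pderiv_add higher_pderiv_smult using DV[OF that, of a s] by simp
  have dsm: "degree (smult c ([:-a, 1:] ^ n)) \<le> n"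
    using degree_smult_le[of c "[:-a, 1:] ^ n"] by (simp add: degree_linear_power)
  have "degree r' \<le> n"
    unfolding r'_def using r(1) dsm degree_add_le[of r n "smult c ([:-a, 1:] ^ n)"] by linarith
  moreover have "\<forall>k<Suc n. poly ((pderiv ^^ k) (qq + s * r')) a = A k"
  proof (intro allI impI)
    fix k assume "k < Suc n"
    then consider "k < n" | "k = n" by linarith
    then show "poly ((pderiv ^^ k) (qq + s * r')) a = A k"
    proof cases
      case 1 then show ?thesis using D[of k] r(2) by simp
    next
      case 2 then show ?thesis using D[of k] assms by (simp add: c_def field_simps)
    qed
  qed
  ultimately show ?case by (intro exI[of _ r']) simp
qed

lemma HERM_exists:
  fixes a b :: real
  assumes "a \<noteq> b"
  shows "\<exists>q. degree q \<le> 2 * m + 1 \<and> (\<forall>k\<le>m. poly ((pderiv ^^ k) q) a = A k \<and> poly ((pderiv ^^ k) q) b = B k)"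
proof -
  obtain r1 where r1: "degree r1 \<le> m" "\<forall>k<Suc m. poly ((pderiv ^^ k) (0 + 1 * r1)) a = A k"
    using GEN[where s=1 and a=a and qq=0 and n="Suc m" and A=A] by auto
  define s where "s = [:-a, 1:] ^ Suc m"
  have sb: "poly s b \<noteq> 0" using assms by (simp add: s_def)
  obtain r2 where r2: "degree r2 \<le> m" "\<forall>k<Suc m. poly ((pderiv ^^ k) (r1 + s * r2)) b = B k"
    using GEN[OF sb, where n="Suc m" and qq=r1 and A=B] by auto
  have "degree (r1 + s * r2) \<le> 2 * m + 1"
  proof -
    have "degree (s * r2) \<le> Suc m + m" using degree_mult_le[of s r2] r2(1)
      by (simp add: s_def degree_linear_power del: power_Suc)
    then show ?thesis using degree_add_le[of r1 "2*m+1" "s * r2"] r1(1) by linarith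
  qed
  moreover have "poly ((pderiv ^^ k) (r1 + s * r2)) a = A k" if "k \<le> m" for k
    using r1(2) that DV[of k "Suc m" a r2] by (simp add: higher_pderiv_add s_def)
  ultimately show ?thesis using r2(2) by (intro exI[of _ "r1 + s * r2"]) auto
qed

lemma order_ge_from_derivs:
  fixes d :: "real poly"
  assumes "d \<noteq> 0" "\<forall>k\<le>m. poly ((pderiv ^^ k) d) a = 0"
  shows "Suc m \<le> order a d"
  using assms
proof (induction m arbitrary: d)
  case 0
  then show ?case using order_root[of d a] by auto
next
  case (Suc m)
  have r: "poly d a = 0" using Suc.prems(2) by (metis funpow_0 le0)
  have pd: "pderiv d \<noteq> 0"
  proof
    assume "pderiv d = 0"
    then obtain c where "d = [:c:]" using pderiv_iszero by blast
    then show False using Suc.prems(1) r by simp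
  qed
  have "\<forall>k\<le>m. poly ((pderiv ^^ k) (pderiv d)) a = 0"
    using Suc.prems(2) by (metis Suc_le_mono hpd_Suc_in)
  then have "Suc m \<le> order a (pderiv d)" using Suc.IH pd by blast
  then show ?case using order_pderiv[OF Suc.prems(1) r] by simp
qed

lemma HERM_unique:
  fixes a b :: real and q1 q2 :: "real poly"
  assumes "a \<noteq> b" "degree q1 \<le> 2 * m + 1" "degree q2 \<le> 2 * m + 1"
    "\<forall>k\<le>m. poly ((pderiv ^^ k) q1) a = poly ((pderiv ^^ k) q2) a"
    "\<forall>k\<le>m. poly ((pderiv ^^ k) q1) b = poly ((pderiv ^^ k) q2) b"
  shows "q1 = q2"
proof (rule ccontr)
  assume ne: "q1 \<noteq> q2"
  define d where "d = q1 - q2"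
  have d0: "d \<noteq> 0" using ne by (simp add: d_def)
  have dd: "degree d \<le> 2 * m + 1" unfolding d_def
    using assms(2,3) degree_diff_le by blast
  have oa: "Suc m \<le> order a d"
    by (rule order_ge_from_derivs[OF d0]) (simp add: d_def higher_pderiv_diff assms(4))
  have ob: "Suc m \<le> order b d"
    by (rule order_ge_from_derivs[OF d0]) (simp add: d_def higher_pderiv_diff assms(5))
  obtain r where dr: "d = [:-a, 1:] ^ Suc m * r"
    using oa order_divides[of a "Suc m" d] by (auto elim: dvdE)
  have r0: "r \<noteq> 0" using d0 dr by auto
  have "order b ([:-a, 1:] ^ Suc m) = 0" using assms(1) by (intro order_0I) simp
  then have "order b d = order b r" using dr order_mult[of "[:-a, 1:] ^ Suc m" r b] d0 by simp
  then have "[:-b, 1:] ^ Suc m dvd r" using ob order_divides[of b "Suc m" r] by (simp del: power_Suc)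
  then have "degree ([:-b, 1:] ^ Suc m) \<le> degree r" using r0 dvd_imp_degree_le by blast
  then have "Suc m \<le> degree r" by (simp only: degree_linear_power)
  moreover have "degree d = Suc m + degree r" using dr r0 by (simp add: degree_mult_eq degree_linear_power del: power_Suc)
  ultimately show False using dd by linarith
qed



definition LP :: "(real \<Rightarrow> real) \<Rightarrow> real \<Rightarrow> bool" where
  "LP f x \<longleftrightarrow> (\<exists>e>0. \<exists>P. \<forall>y\<in>ball x e. f y = poly P y)"

definition PLP :: "(real \<Rightarrow> real) \<Rightarrow> bool" where
  "PLP f \<longleftrightarrow> (\<forall>x. (\<exists>e>0. \<exists>P. \<forall>y\<in>{x-e<..<x}. f y = poly P y) \<and>
                  (\<exists>e>0. \<exists>P. \<forall>y\<in>{x<..<x+e}. f y = poly P y))"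

definition PLC :: "(real \<Rightarrow> real) \<Rightarrow> bool" where
  "PLC F \<longleftrightarrow> (\<forall>x. (\<exists>e>0. \<exists>G. continuous_on {x-e..x} G \<and> (\<forall>y\<in>{x-e<..<x}. F y = G y)) \<and>
                  (\<exists>e>0. \<exists>G. continuous_on {x..x+e} G \<and> (\<forall>y\<in>{x<..<x+e}. F y = G y)))"

lemma LPD:
  fixes f :: "real \<Rightarrow> real" and P :: "real poly"
  assumes "open S" "\<forall>y\<in>S. f y = poly P y"
  shows "\<forall>y\<in>S. (deriv ^^ k) f y = poly ((pderiv ^^ k) P) y"
proof (induction k)
  case 0 then show ?case using assms by simp
next
  case (Suc k)
  show ?case
  proof
    fix y assume y: "y \<in> S"
    have "(poly ((pderiv ^^ k) P) has_real_derivative poly (pderiv ((pderiv ^^ k) P)) y) (at y)"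
      by (rule poly_DERIV)
    then have "((deriv ^^ k) f has_real_derivative poly (pderiv ((pderiv ^^ k) P)) y) (at y)"
      by (rule has_field_derivative_transform_within_open[OF _ assms(1) y]) (use Suc in simp)
    then have "deriv ((deriv ^^ k) f) y = poly (pderiv ((pderiv ^^ k) P)) y"
      by (rule DERIV_imp_deriv)
    then show "(deriv ^^ Suc k) f y = poly ((pderiv ^^ Suc k) P) y" by simp
  qed
qed

lemma LP_deriv: "LP f x \<Longrightarrow> LP ((deriv ^^ k) f) x"
proof -
  assume "LP f x"
  then obtain e P where e: "e > 0" "\<forall>y\<in>ball x e. f y = poly P y" unfolding LP_def by blast
  have "\<forall>y\<in>ball x e. (deriv ^^ k) f y = poly ((pderiv ^^ k) P) y" by (rule LPD[OF open_ball e(2)])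
  then show ?thesis unfolding LP_def using e(1) by blast
qed

lemma LP_val:
  fixes f :: "real \<Rightarrow> real" and P :: "real poly"
  assumes "e > 0" "\<forall>y\<in>ball x e. f y = poly P y"
  shows "(deriv ^^ k) f x = poly ((pderiv ^^ k) P) x"
  using LPD[OF open_ball assms(2)] assms(1) by simp

lemma LP_has_deriv:
  assumes "LP f x"
  shows "((deriv ^^ k) f has_real_derivative (deriv ^^ Suc k) f x) (at x)"
proof -
  obtain e P where e: "e > 0" "\<forall>y\<in>ball x e. f y = poly P y" using assms unfolding LP_def by blast
  have D: "\<forall>y\<in>ball x e. (deriv ^^ k) f y = poly ((pderiv ^^ k) P) y" by (rule LPD[OF open_ball e(2)])
  have "(poly ((pderiv ^^ k) P) has_real_derivative poly (pderiv ((pderiv ^^ k) P)) x) (at x)"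
    by (rule poly_DERIV)
  then have "((deriv ^^ k) f has_real_derivative poly (pderiv ((pderiv ^^ k) P)) x) (at x)"
    by (rule has_field_derivative_transform_within_open[OF _ open_ball[of x e]]) (use D e in auto)
  moreover have "(deriv ^^ Suc k) f x = poly (pderiv ((pderiv ^^ k) P)) x"
    using LP_val[OF e, of "Suc k"] by simp
  ultimately show ?thesis by simp
qed

lemma LP_lin:
  assumes "LP f x" "LP g x"
  shows "(deriv ^^ k) (\<lambda>y. a * f y + b * g y) x = a * (deriv ^^ k) f x + b * (deriv ^^ k) g x"
proof -
  obtain e1 P where e1: "e1 > 0" "\<forall>y\<in>ball x e1. f y = poly P y" using assms(1) unfolding LP_def by blast
  obtain e2 Q where e2: "e2 > 0" "\<forall>y\<in>ball x e2. g y = poly Q y" using assms(2) unfolding LP_def by blast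
  define e where "e = min e1 e2"
  have e: "e > 0" using e1 e2 by (simp add: e_def)
  have "\<forall>y\<in>ball x e. a * f y + b * g y = poly (smult a P + smult b Q) y"
    using e1 e2 by (auto simp: e_def)
  from LP_val[OF e this] LP_val[OF e1] LP_val[OF e2]
  show ?thesis by (simp add: higher_pderiv_add higher_pderiv_smult)
qed

lemma LP_add: "LP f x \<Longrightarrow> LP g x \<Longrightarrow> (deriv ^^ k) (\<lambda>y. f y + g y) x = (deriv ^^ k) f x + (deriv ^^ k) g x"
  using LP_lin[of f x g k 1 1] by simp
lemma LP_diff: "LP f x \<Longrightarrow> LP g x \<Longrightarrow> (deriv ^^ k) (\<lambda>y. f y - g y) x = (deriv ^^ k) f x - (deriv ^^ k) g x"
  using LP_lin[of f x g k 1 "-1"] by simp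

lemma deriv_shift1: "deriv (\<lambda>x. f (x + a)) = (\<lambda>x. deriv f (x + a))"
proof
  fix x
  show "deriv (\<lambda>x. f (x + a)) x = deriv f (x + a)"
    unfolding deriv_def using DERIV_shift[of f _ x a] by simp
qed

lemma deriv_shift: "(deriv ^^ k) (\<lambda>x. f (x + a)) = (\<lambda>x. (deriv ^^ k) f (x + a))"
  by (induction k) (simp_all add: deriv_shift1)

lemma deriv_periodic:
  assumes "\<forall>x. f (x + L) = f x"
  shows "(deriv ^^ k) f (x + L) = (deriv ^^ k) f x"
proof -
  have "(\<lambda>x. f (x + L)) = f" using assms by auto
  then have "(deriv ^^ k) f = (\<lambda>x. (deriv ^^ k) f (x + L))" using deriv_shift[of k f L] by simp
  from fun_cong[OF this, of x] show ?thesis by simp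
qed

lemma PLP_deriv: "PLP f \<Longrightarrow> PLP ((deriv ^^ k) f)"
  unfolding PLP_def
proof (intro allI conjI)
  fix x
  assume A: "\<forall>x. (\<exists>e>0. \<exists>P. \<forall>y\<in>{x - e<..<x}. f y = poly P y) \<and> (\<exists>e>0. \<exists>P. \<forall>y\<in>{x<..<x + e}. f y = poly P y)"
  then obtain e P where e: "e>0" "\<forall>y\<in>{x - e<..<x}. f y = poly P y" by blast
  have "\<forall>y\<in>{x - e<..<x}. (deriv ^^ k) f y = poly ((pderiv ^^ k) P) y"
    by (rule LPD[OF open_greaterThanLessThan e(2)])
  then show "\<exists>e>0. \<exists>P. \<forall>y\<in>{x - e<..<x}. (deriv ^^ k) f y = poly P y"
    using e(1) by (intro exI[of _ e] conjI exI[of _ "(pderiv ^^ k) P"])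
  from A obtain e P where e: "e>0" "\<forall>y\<in>{x<..<x + e}. f y = poly P y" by blast
  have "\<forall>y\<in>{x<..<x+e}. (deriv ^^ k) f y = poly ((pderiv ^^ k) P) y"
    by (rule LPD[OF open_greaterThanLessThan e(2)])
  then show "\<exists>e>0. \<exists>P. \<forall>y\<in>{x<..<x+e}. (deriv ^^ k) f y = poly P y"
    using e(1) by (intro exI[of _ e] conjI exI[of _ "(pderiv ^^ k) P"])
qed

lemma PLP_PLC: "PLP f \<Longrightarrow> PLC f"
  unfolding PLP_def PLC_def
proof (intro allI conjI)
  fix x assume A: "\<forall>x. (\<exists>e>0. \<exists>P. \<forall>y\<in>{x - e<..<x}. f y = poly P y) \<and> (\<exists>e>0. \<exists>P. \<forall>y\<in>{x<..<x + e}. f y = poly P y)"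
  then obtain e P where "e>0" "\<forall>y\<in>{x - e<..<x}. f y = poly P y" by blast
  moreover have "continuous_on {x-e..x} (poly P)" by (rule continuous_on_poly[OF continuous_on_id])
  ultimately show "\<exists>e>0. \<exists>G. continuous_on {x - e..x} G \<and> (\<forall>y\<in>{x - e<..<x}. f y = G y)" by blast
  from A obtain e P where "e>0" "\<forall>y\<in>{x<..<x + e}. f y = poly P y" by blast
  moreover have "continuous_on {x..x+e} (poly P)" by (rule continuous_on_poly[OF continuous_on_id])
  ultimately show "\<exists>e>0. \<exists>G. continuous_on {x..x+e} G \<and> (\<forall>y\<in>{x<..<x+e}. f y = G y)" by blast
qed

lemma PLC_binop:
  fixes op :: "real \<Rightarrow> real \<Rightarrow> real"
  assumes "PLC F" "PLC G"
    and cop: "\<And>(S::real set) (f::real\<Rightarrow>real) (g::real\<Rightarrow>real). continuous_on S f \<Longrightarrow> continuous_on S g \<Longrightarrow> continuous_on S (\<lambda>y. op (f y) (g y))"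
  shows "PLC (\<lambda>y. op (F y) (G y))"
  unfolding PLC_def
proof (intro allI conjI)
  fix x
  obtain e1 G1 where 1: "e1>0" "continuous_on {x-e1..x} G1" "\<forall>y\<in>{x-e1<..<x}. F y = G1 y"
    using assms(1) unfolding PLC_def by blast
  obtain e2 G2 where 2: "e2>0" "continuous_on {x-e2..x} G2" "\<forall>y\<in>{x-e2<..<x}. G y = G2 y"
    using assms(2) unfolding PLC_def by blast
  define e where "e = min e1 e2"
  have "continuous_on {x-e..x} G1" "continuous_on {x-e..x} G2"
    by (rule continuous_on_subset[OF 1(2)], simp add: e_def) (rule continuous_on_subset[OF 2(2)], simp add: e_def)
  then have "continuous_on {x-e..x} (\<lambda>y. op (G1 y) (G2 y))" by (rule cop[of "{x-e..x}" G1 G2])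
  moreover have "\<forall>y\<in>{x-e<..<x}. op (F y) (G y) = op (G1 y) (G2 y)" using 1 2 by (auto simp: e_def)
  moreover have "e > 0" using 1 2 by (simp add: e_def)
  ultimately show "\<exists>e>0. \<exists>H. continuous_on {x-e..x} H \<and> (\<forall>y\<in>{x-e<..<x}. op (F y) (G y) = H y)" by blast
next
  fix x
  obtain e1 G1 where 1: "e1>0" "continuous_on {x..x+e1} G1" "\<forall>y\<in>{x<..<x+e1}. F y = G1 y"
    using assms(1) unfolding PLC_def by blast
  obtain e2 G2 where 2: "e2>0" "continuous_on {x..x+e2} G2" "\<forall>y\<in>{x<..<x+e2}. G y = G2 y"
    using assms(2) unfolding PLC_def by blast
  define e where "e = min e1 e2"
  have "continuous_on {x..x+e} G1" "continuous_on {x..x+e} G2"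
    by (rule continuous_on_subset[OF 1(2)], simp add: e_def) (rule continuous_on_subset[OF 2(2)], simp add: e_def)
  then have "continuous_on {x..x+e} (\<lambda>y. op (G1 y) (G2 y))" by (rule cop[of "{x..x+e}" G1 G2])
  moreover have "\<forall>y\<in>{x<..<x+e}. op (F y) (G y) = op (G1 y) (G2 y)" using 1 2 by (auto simp: e_def)
  moreover have "e > 0" using 1 2 by (simp add: e_def)
  ultimately show "\<exists>e>0. \<exists>H. continuous_on {x..x+e} H \<and> (\<forall>y\<in>{x<..<x+e}. op (F y) (G y) = H y)" by blast
qed

lemma PLC_mult: "PLC F \<Longrightarrow> PLC G \<Longrightarrow> PLC (\<lambda>y. F y * G y)"
  apply (rule PLC_binop[where op="(*)"])
    apply assumption+
  apply (rule continuous_on_mult)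
   apply assumption+
  done

lemma PLC_integrable:
  assumes "PLC F"
  shows "F integrable_on {a..b}"
proof -
  have "F integrable_on cbox a b"
  proof (rule integrable_on_little_subintervals, intro ballI)
    fix x assume "x \<in> cbox a b"
    obtain e1 G1 where 1: "e1>0" "continuous_on {x-e1..x} G1" "\<forall>y\<in>{x-e1<..<x}. F y = G1 y"
      using assms unfolding PLC_def by blast
    obtain e2 G2 where 2: "e2>0" "continuous_on {x..x+e2} G2" "\<forall>y\<in>{x<..<x+e2}. F y = G2 y"
      using assms unfolding PLC_def by blast
    define d where "d = min e1 e2"
    have "d > 0" using 1 2 by (simp add: d_def)
    moreover have "F integrable_on cbox u v" if uv: "x \<in> cbox u v" "cbox u v \<subseteq> ball x d" for u v
    proof -
      have ux: "u \<le> x" "x \<le> v" using uv(1) by auto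
      have "u \<in> cbox u v" "v \<in> cbox u v" using ux by auto
      then have "u \<in> ball x d" "v \<in> ball x d" using uv(2) by blast+
      then have "x - d < u" "v < x + d" by (auto simp: dist_real_def)
      note uv' = ux this
      have "G1 integrable_on {u..x}"
        using uv' by (intro integrable_continuous_real continuous_on_subset[OF 1(2)]) (simp add: d_def)
      then have I1: "F integrable_on {u..x}"
      proof (rule integrable_spike_finite[where S="{x}" and f=G1, rotated 2])
        fix y assume "y \<in> {u..x} - {x}"
        then show "F y = G1 y" using 1(3) uv' by (auto simp: d_def)
      qed simp
      have "G2 integrable_on {x..v}"
        using uv' by (intro integrable_continuous_real continuous_on_subset[OF 2(2)]) (simp add: d_def)
      then have I2: "F integrable_on {x..v}"
      proof (rule integrable_spike_finite[where S="{x}" and f=G2, rotated 2])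
        fix y assume "y \<in> {x..v} - {x}"
        then show "F y = G2 y" using 2(3) uv' by (auto simp: d_def)
      qed simp
      show ?thesis using Henstock_Kurzweil_Integration.integrable_combine[OF uv'(1,2) I1 I2] by simp
    qed
    ultimately show "\<exists>d>0. \<forall>u v. x \<in> cbox u v \<and> cbox u v \<subseteq> ball x d \<and> cbox u v \<subseteq> cbox a b \<longrightarrow> F integrable_on cbox u v"
      by blast
  qed
  then show ?thesis by simp
qed



definition CP :: "real \<Rightarrow> real \<Rightarrow> (real \<Rightarrow> real) \<Rightarrow> bool" where
  "CP h x0 f \<longleftrightarrow> (\<forall>j::int. \<exists>q. \<forall>x\<in>{x0 + of_int j * h .. x0 + (of_int j + 1) * h}. f x = poly q x)"

definition nodes :: "real \<Rightarrow> real \<Rightarrow> real set" where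
  "nodes h x0 = range (\<lambda>j::int. x0 + of_int j * h)"

lemma cell_floor:
  assumes "h > 0"
  shows "x0 + of_int \<lfloor>(x - x0) / h\<rfloor> * h \<le> x" "x < x0 + (of_int \<lfloor>(x - x0) / h\<rfloor> + 1) * h"
proof -
  have a: "of_int \<lfloor>(x - x0) / h\<rfloor> \<le> (x - x0) / h" and b: "(x - x0) / h < of_int \<lfloor>(x - x0) / h\<rfloor> + 1"
    by linarith+
  from a assms have "of_int \<lfloor>(x - x0) / h\<rfloor> * h \<le> x - x0" by (simp add: le_divide_eq)
  then show "x0 + of_int \<lfloor>(x - x0) / h\<rfloor> * h \<le> x" by linarith
  from b assms have "x - x0 < (of_int \<lfloor>(x - x0) / h\<rfloor> + 1) * h" by (simp add: divide_less_eq)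
  then show "x < x0 + (of_int \<lfloor>(x - x0) / h\<rfloor> + 1) * h" by linarith
qed

lemma cell_ceil:
  assumes "h > 0"
  shows "x0 + of_int (\<lceil>(x - x0) / h\<rceil> - 1) * h < x" "x \<le> x0 + (of_int (\<lceil>(x - x0) / h\<rceil> - 1) + 1) * h"
proof -
  have a: "of_int \<lceil>(x - x0) / h\<rceil> - 1 < (x - x0) / h" and b: "(x - x0) / h \<le> of_int \<lceil>(x - x0) / h\<rceil>"
    by linarith+
  from a assms have "(of_int \<lceil>(x - x0) / h\<rceil> - 1) * h < x - x0" by (simp add: less_divide_eq)
  then show "x0 + of_int (\<lceil>(x - x0) / h\<rceil> - 1) * h < x" by simp
  from mult_right_mono[OF b, of h] assms have "x - x0 \<le> of_int \<lceil>(x - x0) / h\<rceil> * h" by simp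
  then show "x \<le> x0 + (of_int (\<lceil>(x - x0) / h\<rceil> - 1) + 1) * h" by simp
qed

lemma cell_floor_strict:
  assumes "h > 0" "x \<notin> nodes h x0"
  shows "x0 + of_int \<lfloor>(x - x0) / h\<rfloor> * h < x"
proof -
  have "x \<noteq> x0 + of_int \<lfloor>(x - x0) / h\<rfloor> * h" using assms(2) unfolding nodes_def by auto
  then show ?thesis using cell_floor(1)[OF assms(1), of x0 x] by linarith
qed

lemma countable_nodes: "countable (nodes h x0)"
  unfolding nodes_def by simp

lemma CP_PLP:
  assumes "h > 0" "CP h x0 f"
  shows "PLP f"
  unfolding PLP_def
proof (intro allI conjI)
  fix x
  define j where "j = \<lceil>(x - x0) / h\<rceil> - 1"
  obtain q where q: "\<forall>y\<in>{x0 + of_int j * h .. x0 + (of_int j + 1) * h}. f y = poly q y"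
    using assms(2) unfolding CP_def by blast
  have c: "x0 + of_int j * h < x" "x \<le> x0 + (of_int j + 1) * h" using cell_ceil[OF assms(1)] j_def by auto
  define e where "e = x - (x0 + of_int j * h)"
  have "e > 0" using c by (simp add: e_def)
  moreover have "\<forall>y\<in>{x-e<..<x}. f y = poly q y" using q c by (auto simp: e_def)
  ultimately show "\<exists>e>0. \<exists>P. \<forall>y\<in>{x-e<..<x}. f y = poly P y" by blast
next
  fix x
  define j where "j = \<lfloor>(x - x0) / h\<rfloor>"
  obtain q where q: "\<forall>y\<in>{x0 + of_int j * h .. x0 + (of_int j + 1) * h}. f y = poly q y"
    using assms(2) unfolding CP_def by blast
  have c: "x0 + of_int j * h \<le> x" "x < x0 + (of_int j + 1) * h" using cell_floor[OF assms(1)] j_def by auto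
  define e where "e = (x0 + (of_int j + 1) * h) - x"
  have "e > 0" using c by (simp add: e_def)
  moreover have "\<forall>y\<in>{x<..<x+e}. f y = poly q y" using q c by (auto simp: e_def)
  ultimately show "\<exists>e>0. \<exists>P. \<forall>y\<in>{x<..<x+e}. f y = poly P y" by blast
qed

lemma CP_LP:
  assumes "h > 0" "CP h x0 f" "x \<notin> nodes h x0"
  shows "LP f x"
proof -
  define j where "j = \<lfloor>(x - x0) / h\<rfloor>"
  obtain q where q: "\<forall>y\<in>{x0 + of_int j * h .. x0 + (of_int j + 1) * h}. f y = poly q y"
    using assms(2) unfolding CP_def by blast
  have c: "x0 + of_int j * h < x" "x < x0 + (of_int j + 1) * h"
    using cell_floor[OF assms(1)] cell_floor_strict[OF assms(1,3)] j_def by auto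
  define e where "e = min (x - (x0 + of_int j * h)) ((x0 + (of_int j + 1) * h) - x)"
  have "e > 0" using c by (simp add: e_def)
  moreover have "\<forall>y\<in>ball x e. f y = poly q y"
  proof
    fix y assume "y \<in> ball x e"
    then have "\<bar>x - y\<bar> < e" by (simp add: dist_real_def)
    then have "y \<in> {x0 + of_int j * h .. x0 + (of_int j + 1) * h}" unfolding e_def by auto
    then show "f y = poly q y" using q by blast
  qed
  ultimately show ?thesis unfolding LP_def by blast
qed

definition GOOD :: "real \<Rightarrow> (real \<Rightarrow> real) \<Rightarrow> bool" where
  "GOOD L f \<longleftrightarrow> (\<forall>x. f (x + L) = f x) \<and> PLP f \<and> (\<exists>N. countable N \<and> (\<forall>x. x \<notin> N \<longrightarrow> LP f x))"

lemma CP_GOOD: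
  assumes "h > 0" "CP h x0 f" "\<forall>x. f (x + L) = f x"
  shows "GOOD L f"
proof -
  have "\<forall>x. x \<notin> nodes h x0 \<longrightarrow> LP f x" using CP_LP[OF assms(1,2)] by blast
  then show ?thesis unfolding GOOD_def using assms(3) CP_PLP[OF assms(1,2)] countable_nodes[of h x0] by blast
qed

lemma PLP_binop:
  fixes op :: "real \<Rightarrow> real \<Rightarrow> real"
  assumes "PLP F" "PLP G" and pop: "\<And>P Q. \<exists>R. \<forall>y. op (poly P y) (poly Q y) = poly R y"
  shows "PLP (\<lambda>y. op (F y) (G y))"
  unfolding PLP_def
proof (intro allI conjI)
  fix x
  obtain e1 P where 1: "e1>0" "\<forall>y\<in>{x-e1<..<x}. F y = poly P y" using assms(1) unfolding PLP_def by blast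
  obtain e2 Q where 2: "e2>0" "\<forall>y\<in>{x-e2<..<x}. G y = poly Q y" using assms(2) unfolding PLP_def by blast
  obtain R where R: "\<forall>y. op (poly P y) (poly Q y) = poly R y" using pop by blast
  have "min e1 e2 > 0" "\<forall>y\<in>{x - min e1 e2<..<x}. op (F y) (G y) = poly R y" using 1 2 R by auto
  then show "\<exists>e>0. \<exists>P. \<forall>y\<in>{x-e<..<x}. op (F y) (G y) = poly P y" by blast
next
  fix x
  obtain e1 P where 1: "e1>0" "\<forall>y\<in>{x<..<x+e1}. F y = poly P y" using assms(1) unfolding PLP_def by blast
  obtain e2 Q where 2: "e2>0" "\<forall>y\<in>{x<..<x+e2}. G y = poly Q y" using assms(2) unfolding PLP_def by blast
  obtain R where R: "\<forall>y. op (poly P y) (poly Q y) = poly R y" using pop by blast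
  have "min e1 e2 > 0" "\<forall>y\<in>{x<..<x + min e1 e2}. op (F y) (G y) = poly R y" using 1 2 R by auto
  then show "\<exists>e>0. \<exists>P. \<forall>y\<in>{x<..<x+e}. op (F y) (G y) = poly P y" by blast
qed

lemma LP_binop:
  fixes op :: "real \<Rightarrow> real \<Rightarrow> real"
  assumes "LP F x" "LP G x" and pop: "\<And>P Q. \<exists>R. \<forall>y. op (poly P y) (poly Q y) = poly R y"
  shows "LP (\<lambda>y. op (F y) (G y)) x"
proof -
  obtain e1 P where 1: "e1>0" "\<forall>y\<in>ball x e1. F y = poly P y" using assms(1) unfolding LP_def by blast
  obtain e2 Q where 2: "e2>0" "\<forall>y\<in>ball x e2. G y = poly Q y" using assms(2) unfolding LP_def by blast
  obtain R where R: "\<forall>y. op (poly P y) (poly Q y) = poly R y" using pop by blast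
  have "min e1 e2 > 0" "\<forall>y\<in>ball x (min e1 e2). op (F y) (G y) = poly R y" using 1 2 R by auto
  then show ?thesis unfolding LP_def by blast
qed

lemma pop_add: "\<exists>R. \<forall>y. poly P y + poly Q y = poly R y" by (metis poly_add)
lemma pop_diff: "\<exists>R. \<forall>y. poly P y - poly Q y = poly R (y::real)" by (metis poly_diff)

lemma GOOD_binop:
  fixes op :: "real \<Rightarrow> real \<Rightarrow> real"
  assumes "GOOD L f" "GOOD L g" and pop: "\<And>P Q. \<exists>R. \<forall>y. op (poly P y) (poly Q y) = poly R y"
  shows "GOOD L (\<lambda>y. op (f y) (g y))"
proof -
  obtain N1 where N1: "countable N1" "\<forall>x. x \<notin> N1 \<longrightarrow> LP f x" using assms(1) unfolding GOOD_def by blast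
  obtain N2 where N2: "countable N2" "\<forall>x. x \<notin> N2 \<longrightarrow> LP g x" using assms(2) unfolding GOOD_def by blast
  have "countable (N1 \<union> N2)" using N1 N2 by simp
  moreover have "\<forall>x. x \<notin> N1 \<union> N2 \<longrightarrow> LP (\<lambda>y. op (f y) (g y)) x"
    using N1 N2 LP_binop[of f _ g op] pop by blast
  moreover have "PLP (\<lambda>y. op (f y) (g y))"
    using assms(1,2) PLP_binop[of f g op] pop unfolding GOOD_def by blast
  moreover have "\<forall>x. op (f (x + L)) (g (x + L)) = op (f x) (g x)" using assms(1,2) unfolding GOOD_def by simp
  ultimately show ?thesis unfolding GOOD_def by blast
qed

lemma GOOD_add: "GOOD L f \<Longrightarrow> GOOD L g \<Longrightarrow> GOOD L (\<lambda>y. f y + g y)"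
  by (rule GOOD_binop[where op="(+)"]) (auto intro: pop_add)
lemma GOOD_diff: "GOOD L f \<Longrightarrow> GOOD L g \<Longrightarrow> GOOD L (\<lambda>y. f y - g y)"
  by (rule GOOD_binop[where op="(-)"]) (auto intro: pop_diff)

lemma poly_shift_eq: "poly P (y + a) = poly (pcompose P [:a, 1:]) (y::real)"
  by (simp add: poly_pcompose algebra_simps)

lemma GOOD_shift:
  assumes "GOOD L f"
  shows "GOOD L (shift a f)"
proof -
  obtain N where N: "countable N" "\<forall>x. x \<notin> N \<longrightarrow> LP f x" using assms unfolding GOOD_def by blast
  have per: "\<forall>x. shift a f (x + L) = shift a f x"
  proof
    fix x
    have "f ((x + a) + L) = f (x + a)" using assms unfolding GOOD_def by blast
    moreover have "x + L + a = (x + a) + L" by simp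
    ultimately show "shift a f (x + L) = shift a f x" unfolding shift_def by (simp only:)
  qed
  have plp: "PLP (shift a f)"
    unfolding PLP_def
  proof (intro allI conjI)
    fix x
    obtain e P where 1: "e>0" "\<forall>y\<in>{x+a-e<..<x+a}. f y = poly P y" using assms unfolding GOOD_def PLP_def by blast
    have "\<forall>y\<in>{x-e<..<x}. shift a f y = poly (pcompose P [:a, 1:]) y"
      using 1(2) by (auto simp: shift_def poly_shift_eq[symmetric])
    then show "\<exists>e>0. \<exists>P. \<forall>y\<in>{x-e<..<x}. shift a f y = poly P y" using 1(1) by blast
  next
    fix x
    obtain e P where 1: "e>0" "\<forall>y\<in>{x+a<..<x+a+e}. f y = poly P y" using assms unfolding GOOD_def PLP_def by blast
    have "\<forall>y\<in>{x<..<x+e}. shift a f y = poly (pcompose P [:a, 1:]) y"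
      using 1(2) by (auto simp: shift_def poly_shift_eq[symmetric])
    then show "\<exists>e>0. \<exists>P. \<forall>y\<in>{x<..<x+e}. shift a f y = poly P y" using 1(1) by blast
  qed
  have lp: "\<forall>x. x \<notin> (\<lambda>y. y - a) ` N \<longrightarrow> LP (shift a f) x"
  proof (intro allI impI)
    fix x assume "x \<notin> (\<lambda>y. y - a) ` N"
    then have "x + a \<notin> N" by (metis add_diff_cancel image_eqI)
    then obtain e P where 1: "e>0" "\<forall>y\<in>ball (x+a) e. f y = poly P y" using N unfolding LP_def by blast
    have "\<forall>y\<in>ball x e. shift a f y = poly (pcompose P [:a, 1:]) y"
      using 1(2) by (auto simp: shift_def poly_shift_eq[symmetric] dist_real_def)
    then show "LP (shift a f) x" unfolding LP_def using 1(1) by blast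
  qed
  show ?thesis unfolding GOOD_def using per plp lp N(1) by blast
qed

definition BB :: "nat \<Rightarrow> real \<Rightarrow> (real \<Rightarrow> real) \<Rightarrow> (real \<Rightarrow> real) \<Rightarrow> real" where
  "BB m L f g = integral {0..L} (\<lambda>x. (deriv ^^ Suc m) f x * (deriv ^^ Suc m) g x)"

lemma seminorm_BB: "seminorm_sq m h K f = BB m (real K * h) f f"
  unfolding seminorm_sq_def BB_def by (simp add: power2_eq_square)

lemma BB_sym: "BB m L f g = BB m L g f"
  unfolding BB_def by (simp add: mult.commute)

lemma integrable_DD:
  assumes "PLP f" "PLP g"
  shows "(\<lambda>x. (deriv ^^ k) f x * (deriv ^^ k) g x) integrable_on {a..b}"
  by (intro PLC_integrable PLC_mult PLP_PLC PLP_deriv assms)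

lemma countable_negligible: "countable N \<Longrightarrow> negligible (N::real set)"
proof -
  assume "countable N"
  then have "negligible (\<Union> ((\<lambda>x. {x}) ` N))"
    by (intro negligible_countable_Union) auto
  then show ?thesis by simp
qed

lemma BB_binop_left:
  assumes "GOOD L f1" "GOOD L f2" "GOOD L g" and s: "s = 1 \<or> s = -1"
  shows "BB m L (\<lambda>x. f1 x + s * f2 x) g = BB m L f1 g + s * BB m L f2 g"
proof -
  obtain N1 where N1: "countable N1" "\<forall>x. x \<notin> N1 \<longrightarrow> LP f1 x" using assms(1) unfolding GOOD_def by blast
  obtain N2 where N2: "countable N2" "\<forall>x. x \<notin> N2 \<longrightarrow> LP f2 x" using assms(2) unfolding GOOD_def by blast
  have neg: "negligible (N1 \<union> N2)" using N1 N2 by (intro countable_negligible) simp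
  have eq: "(deriv ^^ Suc m) (\<lambda>x. f1 x + s * f2 x) x * (deriv ^^ Suc m) g x
      = (deriv ^^ Suc m) f1 x * (deriv ^^ Suc m) g x + s * ((deriv ^^ Suc m) f2 x * (deriv ^^ Suc m) g x)"
    if "x \<in> {0..L} - (N1 \<union> N2)" for x
    using LP_lin[of f1 x f2 "Suc m" 1 s] N1 N2 that by (simp add: algebra_simps)
  have i1: "(\<lambda>x. (deriv ^^ Suc m) f1 x * (deriv ^^ Suc m) g x) integrable_on {0..L}"
    using assms unfolding GOOD_def by (intro integrable_DD) auto
  have i2: "(\<lambda>x. (deriv ^^ Suc m) f2 x * (deriv ^^ Suc m) g x) integrable_on {0..L}"
    using assms unfolding GOOD_def by (intro integrable_DD) auto
  have "BB m L (\<lambda>x. f1 x + s * f2 x) g = integral {0..L} (\<lambda>x. (deriv ^^ Suc m) f1 x * (deriv ^^ Suc m) g x + s * ((deriv ^^ Suc m) f2 x * (deriv ^^ Suc m) g x))"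
    unfolding BB_def by (rule integral_spike[OF neg]) (use eq in simp)
  also have "\<dots> = BB m L f1 g + s * BB m L f2 g"
    unfolding BB_def using integral_add[OF i1 integrable_on_mult_right[OF i2, of s]] by simp
  finally show ?thesis .
qed

lemma BB_add_left: "GOOD L f1 \<Longrightarrow> GOOD L f2 \<Longrightarrow> GOOD L g \<Longrightarrow> BB m L (\<lambda>x. f1 x + f2 x) g = BB m L f1 g + BB m L f2 g"
  using BB_binop_left[of L f1 f2 g 1 m] by simp
lemma BB_diff_left: "GOOD L f1 \<Longrightarrow> GOOD L f2 \<Longrightarrow> GOOD L g \<Longrightarrow> BB m L (\<lambda>x. f1 x - f2 x) g = BB m L f1 g - BB m L f2 g"
  using BB_binop_left[of L f1 f2 g "-1" m] by simp
lemma BB_add_right: "GOOD L f1 \<Longrightarrow> GOOD L f2 \<Longrightarrow> GOOD L g \<Longrightarrow> BB m L g (\<lambda>x. f1 x + f2 x) = BB m L g f1 + BB m L g f2"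
  using BB_add_left[of L f1 f2 g m] by (simp add: BB_sym[of m L g])
lemma BB_diff_right: "GOOD L f1 \<Longrightarrow> GOOD L f2 \<Longrightarrow> GOOD L g \<Longrightarrow> BB m L g (\<lambda>x. f1 x - f2 x) = BB m L g f1 - BB m L g f2"
  using BB_diff_left[of L f1 f2 g m] by (simp add: BB_sym[of m L g])



lemma periodic_nat:
  fixes F :: "real \<Rightarrow> real"
  assumes "\<forall>x. F (x + L) = F x"
  shows "F (x + real n * L) = (F x :: real)"
proof (induction n)
  case 0 then show ?case by simp
next
  case (Suc n)
  have e: "x + real (Suc n) * L = (x + real n * L) + L" by (simp add: algebra_simps)
  have "F (x + real (Suc n) * L) = F ((x + real n * L) + L)" by (simp only: e)
  also have "\<dots> = F (x + real n * L)" using assms by blast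
  also have "\<dots> = F x" by (rule Suc)
  finally show ?case .
qed

lemma periodic_int:
  fixes F :: "real \<Rightarrow> real"
  assumes "\<forall>x. F (x + L) = F x"
  shows "F (x + of_int k * L) = (F x :: real)"
proof (cases "k \<ge> 0")
  case True
  then obtain n where n: "k = int n" using nonneg_eq_int by blast
  show ?thesis using periodic_nat[OF assms, of x n] by (simp add: n)
next
  case False
  define n where "n = nat (-k)"
  have n: "k = - int n" using False by (simp add: n_def)
  have "F ((x - real n * L) + real n * L) = F (x - real n * L)"
    by (rule periodic_nat[OF assms])
  then show ?thesis by (simp add: n)
qed

lemma integral_periodic_shift:
  fixes F :: "real \<Rightarrow> real"
  assumes L: "L > 0" and per: "\<forall>x. F (x + L) = F x" and int: "\<And>a b. F integrable_on {a..b}"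
  shows "integral {c..c+L} F = integral {0..L} F"
proof -
  define k where "k = \<lfloor>c / L\<rfloor>"
  define r where "r = c - of_int k * L"
  have k1: "of_int k \<le> c / L" "c / L < of_int k + 1" unfolding k_def by linarith+
  have r0: "0 \<le> r" using k1(1) L unfolding r_def by (simp add: le_divide_eq)
  have rL: "r < L" using k1(2) L unfolding r_def by (simp add: divide_less_eq algebra_simps)
  have Fk: "F \<circ> (+) (of_int k * L) = F"
    using periodic_int[OF per] by (auto simp: add.commute)
  have FL: "F \<circ> (+) L = F"
    using per by (auto simp: add.commute)
  have "integral {c..c+L} F = integral {r + of_int k * L .. (r + L) + of_int k * L} F"
    unfolding r_def by simp
  also have "\<dots> = integral {r..r+L} F"
    using integral_shift_Icc_real[of r "r+L" F "of_int k * L"] Fk by simp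
  also have "\<dots> = integral {r..L} F + integral {L..r+L} F"
    using Henstock_Kurzweil_Integration.integral_combine[where a=r and c=L and b="r+L" and f=F] r0 rL int by simp
  also have "integral {L..r+L} F = integral {0..r} F"
    using integral_shift_Icc_real[of 0 r F L] FL by (simp add: add.commute)
  also have "integral {r..L} F + integral {0..r} F = integral {0..L} F"
    using Henstock_Kurzweil_Integration.integral_combine[where a=0 and c=r and b=L and f=F] r0 rL int by simp
  finally show ?thesis .
qed

lemma D_shift: "(deriv ^^ k) (shift a f) x = (deriv ^^ k) f (x + a)"
  unfolding shift_def deriv_shift by simp

lemma BB_shift:
  assumes "GOOD L f" "GOOD L g" "L > 0"
  shows "BB m L (shift a f) (shift a g) = BB m L f g"
proof -
  define F where "F = (\<lambda>x. (deriv ^^ Suc m) f x * (deriv ^^ Suc m) g x)"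
  have per: "\<forall>x. F (x + L) = F x"
  proof -
    have "\<forall>x. f (x + L) = f x" "\<forall>x. g (x + L) = g x" using assms(1,2) unfolding GOOD_def by blast+
    then show ?thesis unfolding F_def using deriv_periodic[of f L "Suc m"] deriv_periodic[of g L "Suc m"]
      by (simp del: funpow.simps)
  qed
  have int: "\<And>a b. F integrable_on {a..b}"
    using assms(1,2) unfolding F_def GOOD_def by (intro integrable_DD) auto
  have "BB m L (shift a f) (shift a g) = integral {0..L} (F \<circ> (+) a)"
    unfolding BB_def F_def D_shift by (simp add: o_def add.commute)
  also have "\<dots> = integral {a..a+L} F"
    using integral_shift_Icc_real[of 0 L F a] by (simp add: add.commute)
  also have "\<dots> = integral {0..L} F" by (rule integral_periodic_shift[OF assms(3) per int])
  finally show ?thesis unfolding BB_def F_def .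
qed

lemma floor_cell:
  assumes "h > 0" "x0 + of_int j * h \<le> x" "x < x0 + (of_int j + 1) * h"
  shows "\<lfloor>(x - x0) / h\<rfloor> = j"
proof (rule floor_unique)
  show "of_int j \<le> (x - x0) / h" using assms by (simp add: le_divide_eq)
  show "(x - x0) / h < of_int j + 1" using assms by (simp add: divide_less_eq)
qed

lemma HI_unique:
  assumes h: "h > 0" and g1: "hermite_interpolant m h K x0 f g1" and g2: "hermite_interpolant m h K x0 f g2"
  shows "g1 = g2"
proof
  fix x
  define j where "j = \<lfloor>(x - x0) / h\<rfloor>"
  have c: "x \<in> {x0 + of_int j * h .. x0 + (of_int j + 1) * h}"
  proof -
    have A: "x0 + of_int j * h \<le> x" unfolding j_def by (rule cell_floor(1)[OF h])
    have B: "x < x0 + (of_int j + 1) * h" unfolding j_def by (rule cell_floor(2)[OF h])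
    show ?thesis using A B by simp
  qed
  obtain q1 where q1: "degree q1 \<le> 2 * m + 1" "\<forall>x\<in>{x0 + of_int j * h .. x0 + (of_int j + 1) * h}. g1 x = poly q1 x"
    "\<forall>k\<le>m. poly ((pderiv ^^ k) q1) (x0 + of_int j * h) = (deriv ^^ k) f (x0 + of_int j * h)
              \<and> poly ((pderiv ^^ k) q1) (x0 + (of_int j + 1) * h) = (deriv ^^ k) f (x0 + (of_int j + 1) * h)"
    using g1 unfolding hermite_interpolant_def by blast
  obtain q2 where q2: "degree q2 \<le> 2 * m + 1" "\<forall>x\<in>{x0 + of_int j * h .. x0 + (of_int j + 1) * h}. g2 x = poly q2 x"
    "\<forall>k\<le>m. poly ((pderiv ^^ k) q2) (x0 + of_int j * h) = (deriv ^^ k) f (x0 + of_int j * h)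
              \<and> poly ((pderiv ^^ k) q2) (x0 + (of_int j + 1) * h) = (deriv ^^ k) f (x0 + (of_int j + 1) * h)"
    using g2 unfolding hermite_interpolant_def by blast
  have "q1 = q2"
    by (rule HERM_unique[where a="x0 + of_int j * h" and b="x0 + (of_int j + 1) * h" and m=m]) (use h q1 q2 in auto)
  then show "g1 x = g2 x" using q1(2) q2(2) c by auto
qed

lemma pcompose_shift_derivs:
  "poly ((pderiv ^^ k) (pcompose q [:c, 1:])) y = poly ((pderiv ^^ k) q) (y + (c::real))"
  by (simp add: higher_pderiv_pcompose_shift poly_pcompose algebra_simps)

lemma HI_exists:
  assumes h: "h > 0" and per: "\<forall>x. f (x + real K * h) = f x"
  shows "\<exists>g. hermite_interpolant m h K x0 f g"
proof -
  define lft where "lft = (\<lambda>j::int. x0 + of_int j * h)"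
  define rgt where "rgt = (\<lambda>j::int. x0 + (of_int j + 1) * h)"
  define PR where "PR = (\<lambda>j q. degree q \<le> 2 * m + 1 \<and> (\<forall>k\<le>m. poly ((pderiv ^^ k) q) (lft j) = (deriv ^^ k) f (lft j)
                \<and> poly ((pderiv ^^ k) q) (rgt j) = (deriv ^^ k) f (rgt j)))"
  define qq where "qq = (\<lambda>j. SOME q. PR j q)"
  have qq: "PR j (qq j)" for j
  proof -
    have "lft j \<noteq> rgt j" using h by (simp add: lft_def rgt_def algebra_simps)
    then have "\<exists>q. PR j q" unfolding PR_def by (rule HERM_exists)
    then show ?thesis unfolding qq_def by (rule someI_ex)
  qed
  define g where "g = (\<lambda>x. poly (qq \<lfloor>(x - x0) / h\<rfloor>) x)"
  define L where "L = real K * h"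
  have dper: "(deriv ^^ k) f (y + L) = (deriv ^^ k) f y" for k y
    using deriv_periodic[of f L k y] per unfolding L_def by blast
  have qqK: "qq (j + int K) = pcompose (qq j) [:-L, 1:]" for j
  proof -
    have lK: "lft (j + int K) = lft j + L" "rgt (j + int K) = rgt j + L"
      unfolding lft_def rgt_def L_def by (simp_all add: algebra_simps)
    show ?thesis
    proof (rule HERM_unique[where a="lft (j + int K)" and b="rgt (j + int K)" and m=m])
      show "lft (j + int K) \<noteq> rgt (j + int K)" using h by (simp add: lft_def rgt_def algebra_simps)
      show "degree (qq (j + int K)) \<le> 2 * m + 1" using qq unfolding PR_def by blast
      show "degree (pcompose (qq j) [:- L, 1:]) \<le> 2 * m + 1" using qq[of j] unfolding PR_def
        by (simp add: degree_pcompose)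
      show "\<forall>k\<le>m. poly ((pderiv ^^ k) (qq (j + int K))) (lft (j + int K)) =
                  poly ((pderiv ^^ k) (pcompose (qq j) [:- L, 1:])) (lft (j + int K))"
        using qq[of "j + int K"] qq[of j] unfolding PR_def pcompose_shift_derivs lK by (simp add: dper)
      show "\<forall>k\<le>m. poly ((pderiv ^^ k) (qq (j + int K))) (rgt (j + int K)) =
                  poly ((pderiv ^^ k) (pcompose (qq j) [:- L, 1:])) (rgt (j + int K))"
        using qq[of "j + int K"] qq[of j] unfolding PR_def pcompose_shift_derivs lK by (simp add: dper)
    qed
  qed
  have gcell: "g x = poly (qq j) x" if x: "x \<in> {lft j .. rgt j}" for j x
  proof (cases "x < rgt j")
    case True
    then have "\<lfloor>(x - x0) / h\<rfloor> = j" using x floor_cell[OF h] unfolding lft_def rgt_def by auto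
    then show ?thesis unfolding g_def by simp
  next
    case False
    then have xr: "x = rgt j" using x by auto
    have lr: "lft (j + 1) = rgt j" unfolding lft_def rgt_def by simp
    have "\<lfloor>(x - x0) / h\<rfloor> = j + 1"
      using xr h unfolding rgt_def by simp
    then have "g x = poly (qq (j+1)) (lft (j + 1))" unfolding g_def using xr lr by simp
    also have "\<dots> = f (rgt j)" using qq[of "j+1"] lr unfolding PR_def by (metis funpow_0 le0)
    also have "\<dots> = poly (qq j) x" using qq[of j] xr unfolding PR_def by (metis funpow_0 le0)
    finally show ?thesis .
  qed
  have gper: "g (x + real K * h) = g x" for x
  proof -
    define j where "j = \<lfloor>(x - x0) / h\<rfloor>"
    have e: "(x + real K * h - x0) / h = (x - x0) / h + of_int (int K)" using h by (simp add: field_simps)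
    have "\<lfloor>(x + real K * h - x0) / h\<rfloor> = \<lfloor>(x - x0) / h + of_int (int K)\<rfloor>" by (simp only: e)
    also have "\<dots> = j + int K" unfolding j_def by (rule floor_add_int[symmetric])
    finally have "\<lfloor>(x + real K * h - x0) / h\<rfloor> = j + int K" .
    then have "g (x + real K * h) = poly (pcompose (qq j) [:-L, 1:]) (x + real K * h)"
      unfolding g_def by (simp add: qqK)
    also have "\<dots> = g x" unfolding g_def j_def L_def by (simp add: poly_pcompose)
    finally show ?thesis .
  qed
  have "hermite_interpolant m h K x0 f g"
    unfolding hermite_interpolant_def
  proof (intro conjI allI)
    show "\<And>x. g (x + real K * h) = g x" by (rule gper)
    fix j :: int
    show "\<exists>q. degree q \<le> 2 * m + 1 \<and> (\<forall>x\<in>{x0 + of_int j * h..x0 + (of_int j + 1) * h}. g x = poly q x) \<and>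
             (\<forall>k\<le>m. poly ((pderiv ^^ k) q) (x0 + of_int j * h) = (deriv ^^ k) f (x0 + of_int j * h) \<and>
                     poly ((pderiv ^^ k) q) (x0 + (of_int j + 1) * h) = (deriv ^^ k) f (x0 + (of_int j + 1) * h))"
      using qq[of j] gcell[of _ j] unfolding PR_def lft_def rgt_def by blast
  qed
  then show ?thesis by blast
qed

lemma hermite_op_prop:
  assumes "h > 0" "\<forall>x. f (x + real K * h) = f x"
  shows "hermite_interpolant m h K x0 f (hermite_op m h K x0 f)"
proof -
  have "\<exists>!g. hermite_interpolant m h K x0 f g"
    using HI_exists[OF assms] HI_unique[OF assms(1)] by blast
  then show ?thesis unfolding hermite_op_def by (rule theI')
qed

lemma HI_periodic: "hermite_interpolant m h K x0 f g \<Longrightarrow> \<forall>x. g (x + real K * h) = g x"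
  unfolding hermite_interpolant_def by blast

lemma HI_CP: "hermite_interpolant m h K x0 f g \<Longrightarrow> CP h x0 g"
  unfolding hermite_interpolant_def CP_def by blast

lemma HI_GOOD: "h > 0 \<Longrightarrow> hermite_interpolant m h K x0 f g \<Longrightarrow> GOOD (real K * h) g"
  using CP_GOOD HI_CP HI_periodic by blast

lemma range_shift:
  assumes "p \<in> hermite_range m h K x0"
  shows "shift a p \<in> hermite_range m h K (x0 - a)"
proof -
  have I: "hermite_interpolant m h K x0 p p" using assms unfolding hermite_range_def by simp
  have per: "\<forall>x. shift a p (x + real K * h) = shift a p x"
  proof
    fix x
    have "p ((x + a) + real K * h) = p (x + a)" using HI_periodic[OF I] by blast
    moreover have "x + real K * h + a = (x + a) + real K * h" by simp
    ultimately show "shift a p (x + real K * h) = shift a p x" unfolding shift_def by (simp only:)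
  qed
  have "hermite_interpolant m h K (x0 - a) (shift a p) (shift a p)"
    unfolding hermite_interpolant_def
  proof (intro conjI allI)
    show "\<And>x. shift a p (x + real K * h) = shift a p x" using per by blast
    fix j :: int
    obtain q where q: "degree q \<le> 2 * m + 1" "\<forall>x\<in>{x0 + of_int j * h .. x0 + (of_int j + 1) * h}. p x = poly q x"
      "\<forall>k\<le>m. poly ((pderiv ^^ k) q) (x0 + of_int j * h) = (deriv ^^ k) p (x0 + of_int j * h)
              \<and> poly ((pderiv ^^ k) q) (x0 + (of_int j + 1) * h) = (deriv ^^ k) p (x0 + (of_int j + 1) * h)"
      using I unfolding hermite_interpolant_def by blast
    have "degree (pcompose q [:a, 1:]) \<le> 2 * m + 1" using q(1) by (simp add: degree_pcompose)
    moreover have "\<forall>x\<in>{x0 - a + of_int j * h .. x0 - a + (of_int j + 1) * h}. shift a p x = poly (pcompose q [:a, 1:]) x"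
    proof
      fix x assume "x \<in> {x0 - a + of_int j * h .. x0 - a + (of_int j + 1) * h}"
      then have "x + a \<in> {x0 + of_int j * h .. x0 + (of_int j + 1) * h}" by auto
      then show "shift a p x = poly (pcompose q [:a, 1:]) x" using q(2) by (simp add: shift_def poly_shift_eq)
    qed
    moreover have "\<forall>k\<le>m. poly ((pderiv ^^ k) (pcompose q [:a, 1:])) (x0 - a + of_int j * h) = (deriv ^^ k) (shift a p) (x0 - a + of_int j * h)
              \<and> poly ((pderiv ^^ k) (pcompose q [:a, 1:])) (x0 - a + (of_int j + 1) * h) = (deriv ^^ k) (shift a p) (x0 - a + (of_int j + 1) * h)"
      using q(3) by (simp add: pcompose_shift_derivs D_shift)
    ultimately show "\<exists>q. degree q \<le> 2 * m + 1 \<and> (\<forall>x\<in>{x0 - a + of_int j * h..x0 - a + (of_int j + 1) * h}. shift a p x = poly q x) \<and>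
             (\<forall>k\<le>m. poly ((pderiv ^^ k) q) (x0 - a + of_int j * h) = (deriv ^^ k) (shift a p) (x0 - a + of_int j * h) \<and>
                     poly ((pderiv ^^ k) q) (x0 - a + (of_int j + 1) * h) = (deriv ^^ k) (shift a p) (x0 - a + (of_int j + 1) * h))"
      by blast
  qed
  then show ?thesis unfolding hermite_range_def by simp
qed



lemma LP_open:
  assumes "open S" "x \<in> S" "\<forall>y\<in>S. f y = poly P y"
  shows "LP f x"
proof -
  obtain e where "e > 0" "ball x e \<subseteq> S" using assms(1,2) open_contains_ball by blast
  then show ?thesis unfolding LP_def using assms(3) by blast
qed

lemma interp_data:
  assumes "hermite_interpolant m h K x0 f g"
  obtains q where "degree q \<le> 2 * m + 1" "\<forall>x\<in>{x0 + of_int j * h .. x0 + (of_int j + 1) * h}. g x = poly q x"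
    "\<And>k. k \<le> m \<Longrightarrow> poly ((pderiv ^^ k) q) (x0 + of_int j * h) = (deriv ^^ k) f (x0 + of_int j * h)"
    "\<And>k. k \<le> m \<Longrightarrow> poly ((pderiv ^^ k) q) (x0 + (of_int j + 1) * h) = (deriv ^^ k) f (x0 + (of_int j + 1) * h)"
  using assms unfolding hermite_interpolant_def by blast

lemma range_deriv_cell:
  assumes h: "h > 0" and I: "hermite_interpolant m h K y0 g g" and k: "k \<le> m"
  obtains q where "\<forall>x\<in>{y0 + of_int j * h .. y0 + (of_int j + 1) * h}. (deriv ^^ k) g x = poly ((pderiv ^^ k) q) x"
proof -
  obtain q where q: "\<forall>x\<in>{y0 + of_int j * h .. y0 + (of_int j + 1) * h}. g x = poly q x"
    "\<And>k. k \<le> m \<Longrightarrow> poly ((pderiv ^^ k) q) (y0 + of_int j * h) = (deriv ^^ k) g (y0 + of_int j * h)"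
    "\<And>k. k \<le> m \<Longrightarrow> poly ((pderiv ^^ k) q) (y0 + (of_int j + 1) * h) = (deriv ^^ k) g (y0 + (of_int j + 1) * h)"
    using interp_data[OF I, of j] by metis
  have inner: "\<forall>x\<in>{y0 + of_int j * h <..< y0 + (of_int j + 1) * h}. (deriv ^^ k) g x = poly ((pderiv ^^ k) q) x"
    by (rule LPD[OF open_greaterThanLessThan]) (use q(1) in auto)
  have "\<forall>x\<in>{y0 + of_int j * h .. y0 + (of_int j + 1) * h}. (deriv ^^ k) g x = poly ((pderiv ^^ k) q) x"
  proof
    fix x assume x: "x \<in> {y0 + of_int j * h .. y0 + (of_int j + 1) * h}"
    consider "x = y0 + of_int j * h" | "x = y0 + (of_int j + 1) * h" | "x \<in> {y0 + of_int j * h <..< y0 + (of_int j + 1) * h}"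
      using x by fastforce
    then show "(deriv ^^ k) g x = poly ((pderiv ^^ k) q) x"
    proof cases
      case 1 then show ?thesis using q(2)[OF k] by simp
    next
      case 2 then show ?thesis using q(3)[OF k] by simp
    next
      case 3 then show ?thesis using inner by blast
    qed
  qed
  then show ?thesis using that by blast
qed

lemma range_cont:
  assumes h: "h > 0" and I: "hermite_interpolant m h K y0 g g" and k: "k \<le> m"
  shows "isCont ((deriv ^^ k) g) x"
proof -
  define jl where "jl = \<lceil>(x - y0) / h\<rceil> - 1"
  define jr where "jr = \<lfloor>(x - y0) / h\<rfloor>"
  obtain ql where ql: "\<forall>y\<in>{y0 + of_int jl * h .. y0 + (of_int jl + 1) * h}. (deriv ^^ k) g y = poly ((pderiv ^^ k) ql) y"
    using range_deriv_cell[OF h I k] by blast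
  obtain qr where qr: "\<forall>y\<in>{y0 + of_int jr * h .. y0 + (of_int jr + 1) * h}. (deriv ^^ k) g y = poly ((pderiv ^^ k) qr) y"
    using range_deriv_cell[OF h I k] by blast
  have cl: "y0 + of_int jl * h < x" "x \<le> y0 + (of_int jl + 1) * h"
    unfolding jl_def by (rule cell_ceil(1)[OF h], rule cell_ceil(2)[OF h])
  have cr: "y0 + of_int jr * h \<le> x" "x < y0 + (of_int jr + 1) * h"
    unfolding jr_def by (rule cell_floor(1)[OF h], rule cell_floor(2)[OF h])
  define e where "e = min (x - (y0 + of_int jl * h)) (y0 + (of_int jr + 1) * h - x)"
  have e: "e > 0" using cl cr by (simp add: e_def)
  have c1: "continuous_on {x-e..x} ((deriv ^^ k) g)"
  proof (rule continuous_on_eq[OF continuous_on_poly[OF continuous_on_id]])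
    fix y assume "y \<in> {x-e..x}"
    then have "y \<in> {y0 + of_int jl * h .. y0 + (of_int jl + 1) * h}" using cl by (auto simp: e_def)
    then show "poly ((pderiv ^^ k) ql) y = (deriv ^^ k) g y" using ql by auto
  qed
  have c2: "continuous_on {x..x+e} ((deriv ^^ k) g)"
  proof (rule continuous_on_eq[OF continuous_on_poly[OF continuous_on_id]])
    fix y assume "y \<in> {x..x+e}"
    then have "y \<in> {y0 + of_int jr * h .. y0 + (of_int jr + 1) * h}" using cr by (auto simp: e_def)
    then show "poly ((pderiv ^^ k) qr) y = (deriv ^^ k) g y" using qr by auto
  qed
  have "continuous_on ({x-e..x} \<union> {x..x+e}) ((deriv ^^ k) g)"
    by (rule continuous_on_closed_Un[OF closed_atLeastAtMost closed_atLeastAtMost c1 c2])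
  moreover have "{x-e..x} \<union> {x..x+e} = {x-e..x+e}" using e by auto
  ultimately have "continuous_on {x-e..x+e} ((deriv ^^ k) g)" by simp
  moreover have "x \<in> interior {x-e..x+e}" using e by simp
  ultimately show ?thesis by (rule continuous_on_interior)
qed

lemma finite_nodes_ivl:
  assumes h: "h > 0"
  shows "finite (nodes h y0 \<inter> {a..b})"
proof -
  have "nodes h y0 \<inter> {a..b} \<subseteq> (\<lambda>j::int. y0 + of_int j * h) ` {\<lceil>(a - y0) / h\<rceil> .. \<lfloor>(b - y0) / h\<rfloor>}"
  proof
    fix x assume "x \<in> nodes h y0 \<inter> {a..b}"
    then obtain j where x: "x = y0 + of_int j * h" "a \<le> x" "x \<le> b" unfolding nodes_def by auto
    have "(a - y0) / h \<le> of_int j" using x h by (simp add: divide_le_eq)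
    then have 1: "\<lceil>(a - y0) / h\<rceil> \<le> j" by (simp add: ceiling_le_iff)
    have "of_int j \<le> (b - y0) / h" using x h by (simp add: le_divide_eq)
    then have 2: "j \<le> \<lfloor>(b - y0) / h\<rfloor>" by (simp add: le_floor_iff)
    show "x \<in> (\<lambda>j::int. y0 + of_int j * h) ` {\<lceil>(a - y0) / h\<rceil> .. \<lfloor>(b - y0) / h\<rfloor>}"
      using x(1) 1 2 by auto
  qed
  then show ?thesis by (rule finite_subset) simp
qed

lemma pderiv_high_zero:
  fixes Q :: "real poly"
  assumes "degree Q \<le> n"
  shows "(pderiv ^^ Suc n) Q = 0"
proof -
  have "degree ((pderiv ^^ n) Q) = 0" using assms by (simp add: degree_higher_pderiv)
  then show ?thesis by (simp add: pderiv_eq_0_iff)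
qed



lemma ORTH_cell:
  assumes h: "h > 0"
    and Iu: "hermite_interpolant m h K x1 f0 u"
    and Ig: "hermite_interpolant m h K y0 g g"
    and IA: "hermite_interpolant m h K x1 g A"
  shows "((\<lambda>x. (deriv ^^ Suc m) u x * (deriv ^^ Suc m) (\<lambda>y. g y - A y) x) has_integral 0)
           {x1 + of_int j * h .. x1 + (of_int j + 1) * h}"
proof -
  define a where "a = x1 + of_int j * h"
  define b where "b = x1 + (of_int j + 1) * h"
  have ab: "a < b" using h by (simp add: a_def b_def algebra_simps)
  obtain Q where Q: "degree Q \<le> 2 * m + 1" "\<forall>x\<in>{a..b}. u x = poly Q x"
    using interp_data[OF Iu, of j] unfolding a_def b_def by metis
  obtain R where R: "\<forall>x\<in>{a..b}. A x = poly R x"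
    "\<And>k. k \<le> m \<Longrightarrow> poly ((pderiv ^^ k) R) a = (deriv ^^ k) g a"
    "\<And>k. k \<le> m \<Longrightarrow> poly ((pderiv ^^ k) R) b = (deriv ^^ k) g b"
    using interp_data[OF IA, of j] unfolding a_def b_def by metis
  define F where "F = (\<lambda>x. (deriv ^^ Suc m) u x * (deriv ^^ Suc m) (\<lambda>y. g y - A y) x)"
  define Qd where "Qd = (\<lambda>k x. poly ((pderiv ^^ k) Q) x)"
  define E where "E = (\<lambda>k x. (deriv ^^ k) g x - poly ((pderiv ^^ k) R) x)"
  define T where "T = (\<lambda>i x. (-1) ^ i * Qd (m + 1 + i) x * E (m + 1 - i) x)"
  define \<Phi> where "\<Phi> = (\<lambda>x. \<Sum>i<Suc m. (-1) ^ i * (Qd (m + 1 + i) x * E (m - i) x))"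
  define S where "S = nodes h y0 \<inter> {a..b}"
  have finS: "finite S" unfolding S_def by (rule finite_nodes_ivl[OF h])
  have uo: "\<forall>y\<in>{a<..<b}. u y = poly Q y" using Q(2) by auto
  have Ao: "\<forall>y\<in>{a<..<b}. A y = poly R y" using R(1) by auto
  have Qdd: "(Qd k has_real_derivative Qd (Suc k) x) (at x)" for k x
    unfolding Qd_def using poly_DERIV[of "(pderiv ^^ k) Q" x] by simp
  have deriv: "(\<Phi> has_real_derivative F x) (at x)" if x: "x \<in> {a<..<b} - S" for x
  proof -
    have xn: "x \<notin> nodes h y0" using x unfolding S_def by auto
    have LPg: "LP g x" by (rule CP_LP[OF h HI_CP[OF Ig] xn])
    have LPA: "LP A x" by (rule LP_open[OF open_greaterThanLessThan _ Ao]) (use x in auto)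
    have Ed: "(E k has_real_derivative E (Suc k) x) (at x)" for k
      unfolding E_def using DERIV_diff[OF LP_has_deriv[OF LPg, of k] poly_DERIV[of "(pderiv ^^ k) R" x]] by simp
    have trm: "((\<lambda>x. (-1) ^ i * (Qd (m + 1 + i) x * E (m - i) x)) has_real_derivative
        (-1) ^ i * (Qd (Suc (m + 1 + i)) x * E (m - i) x + E (Suc (m - i)) x * Qd (m + 1 + i) x)) (at x)" for i
      by (rule DERIV_cmult[OF DERIV_mult[OF Qdd Ed]])
    have "(\<Phi> has_real_derivative (\<Sum>i<Suc m. (-1) ^ i * (Qd (Suc (m + 1 + i)) x * E (m - i) x + E (Suc (m - i)) x * Qd (m + 1 + i) x))) (at x)"
      unfolding \<Phi>_def by (rule DERIV_sum) (rule trm)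
    moreover have "(\<Sum>i<Suc m. (-1) ^ i * (Qd (Suc (m + 1 + i)) x * E (m - i) x + E (Suc (m - i)) x * Qd (m + 1 + i) x))
        = (\<Sum>i<Suc m. T i x - T (Suc i) x)"
    proof (rule sum.cong[OF refl])
      fix i assume "i \<in> {..<Suc m}"
      then have i: "i \<le> m" by simp
      have e1: "Suc (m - i) = m + 1 - i" using i by simp
      have e2: "m + 1 - Suc i = m - i" by simp
      have e3: "m + 1 + Suc i = Suc (m + 1 + i)" by simp
      show "(-1) ^ i * (Qd (Suc (m + 1 + i)) x * E (m - i) x + E (Suc (m - i)) x * Qd (m + 1 + i) x) = T i x - T (Suc i) x"
        unfolding T_def e1 e2 e3 by (simp add: algebra_simps)
    qed
    moreover have "(\<Sum>i<Suc m. T i x - T (Suc i) x) = T 0 x - T (Suc m) x"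
      by (rule sum_lessThan_telescope')
    moreover have "T (Suc m) x = 0"
    proof -
      have e: "m + 1 + Suc m = Suc (2 * m + 1)" by simp
      have "(pderiv ^^ (m + 1 + Suc m)) Q = 0" unfolding e by (rule pderiv_high_zero[OF Q(1)])
      then show ?thesis unfolding T_def Qd_def by (simp only: poly_0 mult_zero_left mult_zero_right)
    qed
    moreover have "T 0 x = F x"
    proof -
      have "(deriv ^^ Suc m) u x = poly ((pderiv ^^ Suc m) Q) x"
        using LPD[OF open_greaterThanLessThan uo, of "Suc m"] x by auto
      moreover have "(deriv ^^ Suc m) A x = poly ((pderiv ^^ Suc m) R) x"
        using LPD[OF open_greaterThanLessThan Ao, of "Suc m"] x by auto
      moreover have "(deriv ^^ Suc m) (\<lambda>y. g y - A y) x = (deriv ^^ Suc m) g x - (deriv ^^ Suc m) A x"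
        by (rule LP_diff[OF LPg LPA])
      ultimately show ?thesis unfolding T_def F_def Qd_def E_def by simp
    qed
    ultimately show ?thesis by simp
  qed
  have Econt: "continuous_on {a..b} (E k)" if "k \<le> m" for k
  proof -
    have "continuous_on {a..b} ((deriv ^^ k) g)"
      by (rule continuous_at_imp_continuous_on) (use range_cont[OF h Ig that] in blast)
    then show ?thesis unfolding E_def
      by (intro continuous_on_diff continuous_on_poly continuous_on_id)
  qed
  have Pcont: "continuous_on {a..b} \<Phi>"
    unfolding \<Phi>_def Qd_def
    by (intro continuous_on_sum continuous_on_mult continuous_on_const continuous_on_poly continuous_on_id Econt) simp
  have Pa: "\<Phi> a = 0" unfolding \<Phi>_def E_def using R(2) by simp
  have Pb: "\<Phi> b = 0" unfolding \<Phi>_def E_def using R(3) by simp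
  have "(F has_integral (\<Phi> b - \<Phi> a)) {a..b}"
  proof (rule fundamental_theorem_of_calculus_interior_strong[OF finS])
    show "a \<le> b" using ab by simp
    show "continuous_on {a..b} \<Phi>" by (rule Pcont)
    fix x assume "x \<in> {a<..<b} - S"
    then show "(\<Phi> has_vector_derivative F x) (at x)"
      using deriv has_real_derivative_iff_has_vector_derivative by blast
  qed
  then show ?thesis using Pa Pb unfolding F_def a_def b_def by simp
qed

lemma cells_sum:
  fixes F :: "real \<Rightarrow> real"
  assumes h: "h > 0" and c: "\<And>j::int. (F has_integral 0) {x1 + of_int j * h .. x1 + (of_int j + 1) * h}"
  shows "(F has_integral 0) {x1 .. x1 + real n * h}"
proof (induction n)
  case 0
  have "(F has_integral 0) {x1..x1}" by (simp add: has_integral_refl)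
  then show ?case by simp
next
  case (Suc n)
  have "(F has_integral 0) {x1 + of_int (int n) * h .. x1 + (of_int (int n) + 1) * h}" by (rule c)
  then have c': "(F has_integral 0) {x1 + real n * h .. x1 + real (Suc n) * h}" by (simp add: algebra_simps)
  have "(F has_integral (0 + 0)) {x1 .. x1 + real (Suc n) * h}"
    by (rule has_integral_combine[OF _ _ Suc c']) (use h in \<open>auto simp: algebra_simps\<close>)
  then show ?case by simp
qed

lemma ORTH:
  assumes h: "h > 0" and K: "K \<ge> 1"
    and Iu: "hermite_interpolant m h K x1 f0 u"
    and Ig: "hermite_interpolant m h K y0 g g"
    and IA: "hermite_interpolant m h K x1 g A"
  shows "BB m (real K * h) u (\<lambda>x. g x - A x) = 0"
proof -
  define L where "L = real K * h"
  have L: "L > 0" using h K by (simp add: L_def)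
  have Gu: "GOOD L u" unfolding L_def by (rule HI_GOOD[OF h Iu])
  have Gg: "GOOD L g" unfolding L_def by (rule HI_GOOD[OF h Ig])
  have GA: "GOOD L A" unfolding L_def by (rule HI_GOOD[OF h IA])
  have Gd: "GOOD L (\<lambda>x. g x - A x)" by (rule GOOD_diff[OF Gg GA])
  define F where "F = (\<lambda>x. (deriv ^^ Suc m) u x * (deriv ^^ Suc m) (\<lambda>y. g y - A y) x)"
  have per: "\<forall>x. F (x + L) = F x"
  proof -
    have "\<forall>x. u (x + L) = u x" "\<forall>x. g (x + L) - A (x + L) = g x - A x" using Gu Gd unfolding GOOD_def by auto
    then show ?thesis unfolding F_def using deriv_periodic[of u L "Suc m"] deriv_periodic[of "\<lambda>x. g x - A x" L "Suc m"]
      by (simp del: funpow.simps)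
  qed
  have int: "\<And>a b. F integrable_on {a..b}"
    using Gu Gd unfolding F_def GOOD_def by (intro integrable_DD) auto
  have "(F has_integral 0) {x1 .. x1 + real K * h}"
    by (rule cells_sum[OF h]) (unfold F_def, rule ORTH_cell[OF h Iu Ig IA])
  then have "integral {x1 .. x1 + L} F = 0" unfolding L_def by (rule integral_unique)
  moreover have "integral {x1 .. x1 + L} F = integral {0..L} F" by (rule integral_periodic_shift[OF L per int])
  ultimately show ?thesis unfolding BB_def F_def L_def by simp
qed



lemma GOOD_add_simp [simp]: "GOOD L f \<Longrightarrow> GOOD L g \<Longrightarrow> GOOD L (\<lambda>y. f y + g y) = True"
  using GOOD_add by blast
lemma GOOD_diff_simp [simp]: "GOOD L f \<Longrightarrow> GOOD L g \<Longrightarrow> GOOD L (\<lambda>y. f y - g y) = True"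
  using GOOD_diff by blast

lemma ALG:
  assumes G: "GOOD L w" "GOOD L a" "GOOD L b" "GOOD L A" "GOOD L B"
    and o1: "BB m L w (\<lambda>x. a x - A x) = 0" and o2: "BB m L A (\<lambda>x. a x - A x) = 0"
    and o3: "BB m L B (\<lambda>x. a x - A x) = 0" and o4: "BB m L w (\<lambda>x. b x - B x) = 0"
    and o5: "BB m L A (\<lambda>x. b x - B x) = 0" and o6: "BB m L B (\<lambda>x. b x - B x) = 0"
  shows "BB m L (\<lambda>x. b x - w x) (\<lambda>x. b x - w x) + BB m L (\<lambda>x. a x + w x) (\<lambda>x. a x + w x)
       = BB m L (\<lambda>x. w x + A x - B x - a x) (\<lambda>x. w x + A x - B x - a x)
       + BB m L (\<lambda>x. w x + A x - B x + b x) (\<lambda>x. w x + A x - B x + b x)"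
proof -
  note lin = BB_add_left BB_diff_left BB_add_right BB_diff_right
  have s: "BB m L a w = BB m L w a" "BB m L b w = BB m L w b" "BB m L A w = BB m L w A" "BB m L B w = BB m L w B"
    "BB m L A a = BB m L a A" "BB m L B a = BB m L a B" "BB m L b a = BB m L a b"
    "BB m L A b = BB m L b A" "BB m L B b = BB m L b B" "BB m L B A = BB m L A B"
    by (simp_all add: BB_sym)
  have O: "BB m L w a = BB m L w A" "BB m L A a = BB m L A A" "BB m L B a = BB m L B A"
    "BB m L w b = BB m L w B" "BB m L A b = BB m L A B" "BB m L B b = BB m L B B"
    using o1 o2 o3 o4 o5 o6 G by (simp_all add: lin)
  show ?thesis using G O s by (simp add: lin)
qed



lemma shift_combo1: "shift (- a) (\<lambda>x. f x - shift a g x) = (\<lambda>x. shift (- a) f x - g x)"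
  unfolding shift_def by simp
lemma shift_combo2: "shift a (\<lambda>x. f x + shift (- a) g x) = (\<lambda>x. shift a f x + g x)"
  unfolding shift_def by simp

lemma range_GOOD: "h > 0 \<Longrightarrow> f \<in> hermite_range m h K x0 \<Longrightarrow> GOOD (real K * h) f"
  unfolding hermite_range_def using HI_GOOD by blast

lemma range_per: "f \<in> hermite_range m h K x0 \<Longrightarrow> \<forall>x. f (x + real K * h) = f x"
  unfolding hermite_range_def using HI_periodic by blast

lemma step_lemma:
  fixes w p0 :: "real \<Rightarrow> real" and al :: real
  assumes h: "h > 0" and K: "K \<ge> 1"
    and wR: "w \<in> hermite_range m h K x1" and pR: "p0 \<in> hermite_range m h K y0"
  defines "a \<equiv> shift al p0" and "b \<equiv> shift (- al) p0"
    and "A \<equiv> hermite_op m h K x1 (shift al p0)" and "B \<equiv> hermite_op m h K x1 (shift (- al) p0)"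
  shows "BB m (real K * h) (\<lambda>x. p0 x - shift al w x) (\<lambda>x. p0 x - shift al w x)
       + BB m (real K * h) (\<lambda>x. p0 x + shift (- al) w x) (\<lambda>x. p0 x + shift (- al) w x)
       = BB m (real K * h) (\<lambda>x. w x + A x - B x - a x) (\<lambda>x. w x + A x - B x - a x)
       + BB m (real K * h) (\<lambda>x. w x + A x - B x + b x) (\<lambda>x. w x + A x - B x + b x)"
proof -
  define L where "L = real K * h"
  have L: "L > 0" using h K by (simp add: L_def)
  have aR: "a \<in> hermite_range m h K (y0 - al)" unfolding a_def by (rule range_shift[OF pR])
  have bR: "b \<in> hermite_range m h K (y0 - - al)" unfolding b_def by (rule range_shift[OF pR])
  have Ia: "hermite_interpolant m h K (y0 - al) a a" using aR unfolding hermite_range_def by simp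
  have Ib: "hermite_interpolant m h K (y0 - - al) b b" using bR unfolding hermite_range_def by simp
  have Iw: "hermite_interpolant m h K x1 w w" using wR unfolding hermite_range_def by simp
  have IA: "hermite_interpolant m h K x1 a A" unfolding A_def a_def[symmetric] by (rule hermite_op_prop[OF h range_per[OF aR]])
  have IB: "hermite_interpolant m h K x1 b B" unfolding B_def b_def[symmetric] by (rule hermite_op_prop[OF h range_per[OF bR]])
  have Gw: "GOOD L w" unfolding L_def by (rule range_GOOD[OF h wR])
  have Gp: "GOOD L p0" unfolding L_def by (rule range_GOOD[OF h pR])
  have Ga: "GOOD L a" unfolding L_def by (rule range_GOOD[OF h aR])
  have Gb: "GOOD L b" unfolding L_def by (rule range_GOOD[OF h bR])
  have GA: "GOOD L A" unfolding L_def by (rule HI_GOOD[OF h IA])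
  have GB: "GOOD L B" unfolding L_def by (rule HI_GOOD[OF h IB])
  have o1: "BB m L w (\<lambda>x. a x - A x) = 0" unfolding L_def by (rule ORTH[OF h K Iw Ia IA])
  have o2: "BB m L A (\<lambda>x. a x - A x) = 0" unfolding L_def by (rule ORTH[OF h K IA Ia IA])
  have o3: "BB m L B (\<lambda>x. a x - A x) = 0" unfolding L_def by (rule ORTH[OF h K IB Ia IA])
  have o4: "BB m L w (\<lambda>x. b x - B x) = 0" unfolding L_def by (rule ORTH[OF h K Iw Ib IB])
  have o5: "BB m L A (\<lambda>x. b x - B x) = 0" unfolding L_def by (rule ORTH[OF h K IA Ib IB])
  have o6: "BB m L B (\<lambda>x. b x - B x) = 0" unfolding L_def by (rule ORTH[OF h K IB Ib IB])
  have sw: "GOOD L (shift al w)" "GOOD L (shift (- al) w)" using Gw by (simp_all add: GOOD_shift)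
  have e1: "BB m L (\<lambda>x. p0 x - shift al w x) (\<lambda>x. p0 x - shift al w x) = BB m L (\<lambda>x. b x - w x) (\<lambda>x. b x - w x)"
  proof -
    have "GOOD L (\<lambda>x. p0 x - shift al w x)" using Gp sw by simp
    then have "BB m L (\<lambda>x. p0 x - shift al w x) (\<lambda>x. p0 x - shift al w x)
       = BB m L (shift (- al) (\<lambda>x. p0 x - shift al w x)) (shift (- al) (\<lambda>x. p0 x - shift al w x))"
      using BB_shift[OF _ _ L] by metis
    also have "\<dots> = BB m L (\<lambda>x. b x - w x) (\<lambda>x. b x - w x)" unfolding shift_combo1 b_def ..
    finally show ?thesis .
  qed
  have e2: "BB m L (\<lambda>x. p0 x + shift (- al) w x) (\<lambda>x. p0 x + shift (- al) w x) = BB m L (\<lambda>x. a x + w x) (\<lambda>x. a x + w x)"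
  proof -
    have "GOOD L (\<lambda>x. p0 x + shift (- al) w x)" using Gp sw by simp
    then have "BB m L (\<lambda>x. p0 x + shift (- al) w x) (\<lambda>x. p0 x + shift (- al) w x)
       = BB m L (shift al (\<lambda>x. p0 x + shift (- al) w x)) (shift al (\<lambda>x. p0 x + shift (- al) w x))"
      using BB_shift[OF _ _ L] by metis
    also have "\<dots> = BB m L (\<lambda>x. a x + w x) (\<lambda>x. a x + w x)" unfolding shift_combo2 a_def ..
    finally show ?thesis .
  qed
  show ?thesis unfolding L_def[symmetric] e1 e2
    by (rule ALG[OF Gw Ga Gb GA GB o1 o2 o3 o4 o5 o6])
qed



theorem mainTheorem1:
  fixes m K :: nat and h c dt :: real and p v :: "real \<Rightarrow> real \<Rightarrow> real"
  assumes "K \<ge> 1" and "h > 0" and "c > 0" and "dt > 0"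
    and "\<And>n::nat. (\<lambda>x. p x (real n * dt)) \<in> hermite_range m h K 0"
    and "\<And>n::nat. (\<lambda>x. v x ((real n + 1 / 2) * dt)) \<in> hermite_range m h K (h / 2)"
    and "(\<lambda>x. v x (- dt / 2)) \<in> hermite_range m h K (h / 2)"
    and "\<And>n::nat. (\<lambda>x. v x (real n * dt + dt / 2)) =
           (\<lambda>x. v x (real n * dt - dt / 2)
              + hermite_op m h K (h / 2) (shift (c * dt / 2) (\<lambda>y. p y (real n * dt))) x
              - hermite_op m h K (h / 2) (shift (- (c * dt / 2)) (\<lambda>y. p y (real n * dt))) x)"
    and "\<And>n::nat. (\<lambda>x. p x (real n * dt + dt)) =
           (\<lambda>x. p x (real n * dt)
              + hermite_op m h K 0 (shift (c * dt / 2) (\<lambda>y. v y (real n * dt + dt / 2))) x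
              - hermite_op m h K 0 (shift (- (c * dt / 2)) (\<lambda>y. v y (real n * dt + dt / 2))) x)"
  shows "\<forall>n::nat.
           Qh m h K c dt p v ((real n + 1) * dt) = Rh m h K c dt p v ((real n + 1 / 2) * dt)
         \<and> Rh m h K c dt p v ((real n + 1 / 2) * dt) = Qh m h K c dt p v (real n * dt)
         \<and> Qh m h K c dt p v (real n * dt) = Qh m h K c dt p v 0
         \<and> Rh m h K c dt p v ((real n + 1 / 2) * dt) = Qh m h K c dt p v 0"
proof -
  note K = assms(1) and h = assms(2)
  define al where "al = c * dt / 2"
  define L where "L = real K * h"
  define pn where "pn = (\<lambda>n::nat. (\<lambda>y. p y (real n * dt)))"
  define vm where "vm = (\<lambda>n::nat. (\<lambda>y. v y (real n * dt - dt / 2)))"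
  define vh where "vh = (\<lambda>n::nat. (\<lambda>y. v y (real n * dt + dt / 2)))"
  define J where "J = hermite_op m h K (h / 2)"
  define I where "I = hermite_op m h K 0"
  have pR: "pn n \<in> hermite_range m h K 0" for n unfolding pn_def by (rule assms(5))
  have vhR: "vh n \<in> hermite_range m h K (h / 2)" for n
  proof -
    have "(real n + 1 / 2) * dt = real n * dt + dt / 2" by (simp add: algebra_simps)
    then show ?thesis using assms(6)[of n] unfolding vh_def by simp
  qed
  have vmS: "vm (Suc n) = vh n" for n
  proof -
    have "real (Suc n) * dt - dt / 2 = real n * dt + dt / 2" by (simp add: algebra_simps)
    then show ?thesis unfolding vm_def vh_def by (simp only:)
  qed
  have vmR: "vm n \<in> hermite_range m h K (h / 2)" for n
  proof (cases n)
    case 0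
    have "vm 0 = (\<lambda>x. v x (- dt / 2))" unfolding vm_def by simp
    then show ?thesis using assms(7) 0 by simp
  next
    case (Suc k)
    then show ?thesis using vhR[of k] vmS[of k] by simp
  qed
  have U1: "vh n = (\<lambda>x. vm n x + J (shift al (pn n)) x - J (shift (- al) (pn n)) x)" for n
    unfolding vh_def vm_def J_def al_def pn_def by (rule assms(8))
  have U2: "pn (Suc n) = (\<lambda>x. pn n x + I (shift al (vh n)) x - I (shift (- al) (vh n)) x)" for n
  proof -
    have "real (Suc n) * dt = real n * dt + dt" by (simp add: algebra_simps)
    then show ?thesis unfolding vh_def I_def al_def pn_def using assms(9)[of n] by simp
  qed
  have Qf: "Qh m h K c dt p v (real n * dt) =
      BB m L (\<lambda>x. pn n x - shift al (vm n) x) (\<lambda>x. pn n x - shift al (vm n) x)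
    + BB m L (\<lambda>x. pn n x + shift (- al) (vm n) x) (\<lambda>x. pn n x + shift (- al) (vm n) x)" for n
    unfolding Qh_def seminorm_BB pn_def vm_def al_def L_def ..
  have Rf: "Rh m h K c dt p v ((real n + 1 / 2) * dt) =
      BB m L (\<lambda>x. vh n x - shift al (pn n) x) (\<lambda>x. vh n x - shift al (pn n) x)
    + BB m L (\<lambda>x. vh n x + shift (- al) (pn n) x) (\<lambda>x. vh n x + shift (- al) (pn n) x)" for n
  proof -
    have e1: "(real n + 1 / 2) * dt = real n * dt + dt / 2" by (simp add: algebra_simps)
    have e2: "real n * dt + dt / 2 - dt / 2 = real n * dt" by simp
    show ?thesis unfolding e1 Rh_def seminorm_BB e2 pn_def vh_def al_def L_def ..
  qed
  have E1: "Rh m h K c dt p v ((real n + 1 / 2) * dt) = Qh m h K c dt p v (real n * dt)" for n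
  proof -
    have "Qh m h K c dt p v (real n * dt) =
        BB m L (\<lambda>x. vm n x + J (shift al (pn n)) x - J (shift (- al) (pn n)) x - shift al (pn n) x)
               (\<lambda>x. vm n x + J (shift al (pn n)) x - J (shift (- al) (pn n)) x - shift al (pn n) x)
      + BB m L (\<lambda>x. vm n x + J (shift al (pn n)) x - J (shift (- al) (pn n)) x + shift (- al) (pn n) x)
               (\<lambda>x. vm n x + J (shift al (pn n)) x - J (shift (- al) (pn n)) x + shift (- al) (pn n) x)"
      unfolding Qf L_def J_def by (rule step_lemma[OF h K vmR pR])
    also have "\<dots> = Rh m h K c dt p v ((real n + 1 / 2) * dt)"
      unfolding Rf by (simp only: U1)
    finally show ?thesis by simp
  qed
  have E2: "Qh m h K c dt p v ((real n + 1) * dt) = Rh m h K c dt p v ((real n + 1 / 2) * dt)" for n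
  proof -
    have "Rh m h K c dt p v ((real n + 1 / 2) * dt) =
        BB m L (\<lambda>x. pn n x + I (shift al (vh n)) x - I (shift (- al) (vh n)) x - shift al (vh n) x)
               (\<lambda>x. pn n x + I (shift al (vh n)) x - I (shift (- al) (vh n)) x - shift al (vh n) x)
      + BB m L (\<lambda>x. pn n x + I (shift al (vh n)) x - I (shift (- al) (vh n)) x + shift (- al) (vh n) x)
               (\<lambda>x. pn n x + I (shift al (vh n)) x - I (shift (- al) (vh n)) x + shift (- al) (vh n) x)"
      unfolding Rf L_def I_def by (rule step_lemma[OF h K pR vhR])
    also have "\<dots> = Qh m h K c dt p v (real (Suc n) * dt)"
      unfolding Qf vmS by (simp only: U2)
    finally have X: "Rh m h K c dt p v ((real n + 1 / 2) * dt) = Qh m h K c dt p v (real (Suc n) * dt)" .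
    have e: "real (Suc n) = real n + 1" by simp
    show ?thesis using X[unfolded e] by (rule sym)
  qed
  have Q0: "Qh m h K c dt p v (real n * dt) = Qh m h K c dt p v 0" for n
  proof (induction n)
    case 0 then show ?case by simp
  next
    case (Suc n)
    have "Qh m h K c dt p v (real (Suc n) * dt) = Qh m h K c dt p v ((real n + 1) * dt)" by (simp add: add.commute)
    also have "\<dots> = Qh m h K c dt p v (real n * dt)" using E1 E2 by simp
    finally show ?case using Suc by simp
  qed
  show ?thesis using E1 E2 Q0 by simp
qed


end
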